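(* Let $\psi$ be a state on $\mathcal L(\mathcal H)$. (a) The set of eigenvalues of modulus 1 of $L(\psi)$ is a (finite) subgroup of $U(1)$, and likewise for $\rho(\psi)$; in particular these eigenvalues are roots of unity. (b) There exist pre-subgroups $f,g$ of $V$ such that the subspace spanned by the eigenvectors of $L(\psi)$ for eigenvalues of modulus 1 equals $H^f$, and the subspace spanned by the eigenvectors of $\rho(\psi)$ for eigenvalues of modulus 1 equals $H_g$.
   Context: Let $\mathcal H$ be a finite-dimensional Hilbert space and $V$ a multiplicative unitary on $\mathcal H$ ($V_{12}V_{13}V_{23}=V_{23}V_{12}$) of multiplicity 1 (one-dimensional space of fixed vectors $\xi$, i.e. $V(\xi\otimes\eta)=\xi\otimes\eta$ for all $\eta$). Fix a unit fixed vector $e$. $L(\omega)=(\omega\otimes\mathrm{id})(V)$, $\rho(\omega)=(\mathrm{id}\otimes\omega)(V)$ for $\omega\in\mathcal L(\mathcal H)^*$. A pre-subgroup is $f\in\mathcal H$ with $\|f\|=1$, $\langle f,e\rangle>0$, $V(f\otimes f)=f\otimes f$; $H^f=\{\eta:V(f\otimes\eta)=f\otimes\eta\}$, $H_f=\{\eta:V(\eta\otimes f)=\eta\otimes f\}$. *)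

theory Defs
  imports Complex_Main
begin

text \<open>Finite-dimensional Hilbert space H = C^I with I a finite index type (orthonormal basis).
 H (x) H has index type I x I, H (x) H (x) H has index type I x I x I.\<close>

type_synonym 'i hvec = "'i \<Rightarrow> complex"
type_synonym 'i hop = "'i \<Rightarrow> 'i \<Rightarrow> complex"

definition mv :: "'i::finite hop \<Rightarrow> 'i hvec \<Rightarrow> 'i hvec" where
  "mv A x = (\<lambda>i. \<Sum>j\<in>UNIV. A i j * x j)"

definition mm :: "'i::finite hop \<Rightarrow> 'i hop \<Rightarrow> 'i hop" where
  "mm A B = (\<lambda>i k. \<Sum>j\<in>UNIV. A i j * B j k)"

definition idop :: "'i hop" where
  "idop = (\<lambda>i j. if i = j then 1 else 0)"

definition adj :: "'i hop \<Rightarrow> 'i hop" where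
  "adj A = (\<lambda>i j. cnj (A j i))"

definition unitary_op :: "'i::finite hop \<Rightarrow> bool" where
  "unitary_op A \<longleftrightarrow> mm A (adj A) = idop \<and> mm (adj A) A = idop"

definition cinner :: "'i::finite hvec \<Rightarrow> 'i hvec \<Rightarrow> complex" where
  "cinner x y = (\<Sum>i\<in>UNIV. x i * cnj (y i))"

definition hnorm :: "'i::finite hvec \<Rightarrow> real" where
  "hnorm x = sqrt (\<Sum>i\<in>UNIV. (cmod (x i))\<^sup>2)"

definition tens :: "'i hvec \<Rightarrow> 'i hvec \<Rightarrow> ('i \<times> 'i) hvec" where
  "tens x y = (\<lambda>(i, j). x i * y j)"

definition cspan :: "'i hvec set \<Rightarrow> 'i hvec set" where
  "cspan E = {v. \<exists>S c. finite S \<and> S \<subseteq> E \<and> v = (\<lambda>i. \<Sum>x\<in>S. c x * x i)}"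

definition leg12 :: "('i \<times> 'i) hop \<Rightarrow> ('i \<times> 'i \<times> 'i) hop" where
  "leg12 V = (\<lambda>(a, b, c) (a', b', c'). V (a, b) (a', b') * (if c = c' then 1 else 0))"

definition leg13 :: "('i \<times> 'i) hop \<Rightarrow> ('i \<times> 'i \<times> 'i) hop" where
  "leg13 V = (\<lambda>(a, b, c) (a', b', c'). V (a, c) (a', c') * (if b = b' then 1 else 0))"

definition leg23 :: "('i \<times> 'i) hop \<Rightarrow> ('i \<times> 'i \<times> 'i) hop" where
  "leg23 V = (\<lambda>(a, b, c) (a', b', c'). V (b, c) (b', c') * (if a = a' then 1 else 0))"

definition multiplicative_unitary :: "('i::finite \<times> 'i) hop \<Rightarrow> bool" where
  "multiplicative_unitary V \<longleftrightarrow> unitary_op V \<and>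
     mm (mm (leg12 V) (leg13 V)) (leg23 V) = mm (leg23 V) (leg12 V)"

definition fixed_vec :: "('i::finite \<times> 'i) hop \<Rightarrow> 'i hvec \<Rightarrow> bool" where
  "fixed_vec V \<xi> \<longleftrightarrow> (\<forall>\<eta>. mv V (tens \<xi> \<eta>) = tens \<xi> \<eta>)"

definition multiplicity_one :: "('i::finite \<times> 'i) hop \<Rightarrow> bool" where
  "multiplicity_one V \<longleftrightarrow> (\<exists>\<xi>. \<xi> \<noteq> (\<lambda>_. 0) \<and> fixed_vec V \<xi>) \<and>
     (\<forall>\<xi> \<xi>'. fixed_vec V \<xi> \<and> fixed_vec V \<xi>' \<and> \<xi> \<noteq> (\<lambda>_. 0) \<longrightarrow> (\<exists>c. \<xi>' = (\<lambda>i. c * \<xi> i)))"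

text \<open>V = sum_{b,b'} M_{bb'} (x) E_{bb'} with M_{bb'} a a' = V (a,b) (a',b'), so
 (omega (x) id)(V) has matrix entries omega(M_{bb'}); similarly for (id (x) omega)(V).\<close>
definition linear_functional :: "('i::finite hop \<Rightarrow> complex) \<Rightarrow> bool" where
  "linear_functional \<omega> \<longleftrightarrow> (\<forall>A B. \<omega> (\<lambda>i j. A i j + B i j) = \<omega> A + \<omega> B) \<and>
     (\<forall>c A. \<omega> (\<lambda>i j. c * A i j) = c * \<omega> A)"

definition is_state :: "('i::finite hop \<Rightarrow> complex) \<Rightarrow> bool" where
  "is_state \<psi> \<longleftrightarrow> linear_functional \<psi> \<and> \<psi> idop = 1 \<and>
     (\<forall>A. Im (\<psi> (mm (adj A) A)) = 0 \<and> Re (\<psi> (mm (adj A) A)) \<ge> 0)"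

definition Lslice :: "('i \<times> 'i) hop \<Rightarrow> ('i hop \<Rightarrow> complex) \<Rightarrow> 'i hop" where
  "Lslice V \<omega> = (\<lambda>b b'. \<omega> (\<lambda>a a'. V (a, b) (a', b')))"

definition Rslice :: "('i \<times> 'i) hop \<Rightarrow> ('i hop \<Rightarrow> complex) \<Rightarrow> 'i hop" where
  "Rslice V \<omega> = (\<lambda>a a'. \<omega> (\<lambda>b b'. V (a, b) (a', b')))"

definition unimodular_eigenvalues :: "'i::finite hop \<Rightarrow> complex set" where
  "unimodular_eigenvalues T = {z. cmod z = 1 \<and> (\<exists>x. x \<noteq> (\<lambda>_. 0) \<and> mv T x = (\<lambda>i. z * x i))}"

definition unimodular_eigenvectors :: "'i::finite hop \<Rightarrow> 'i hvec set" where
  "unimodular_eigenvectors T = {x. x \<noteq> (\<lambda>_. 0) \<and> (\<exists>z. cmod z = 1 \<and> mv T x = (\<lambda>i. z * x i))}"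

definition finite_subgroup_U1 :: "complex set \<Rightarrow> bool" where
  "finite_subgroup_U1 G \<longleftrightarrow> finite G \<and> G \<subseteq> {z. cmod z = 1} \<and> 1 \<in> G \<and>
     (\<forall>x\<in>G. \<forall>y\<in>G. x * y \<in> G) \<and> (\<forall>x\<in>G. inverse x \<in> G)"

definition pre_subgroup :: "('i::finite \<times> 'i) hop \<Rightarrow> 'i hvec \<Rightarrow> 'i hvec \<Rightarrow> bool" where
  "pre_subgroup V e f \<longleftrightarrow> hnorm f = 1 \<and> Im (cinner f e) = 0 \<and> Re (cinner f e) > 0 \<and>
     mv V (tens f f) = tens f f"

definition Hsup :: "('i::finite \<times> 'i) hop \<Rightarrow> 'i hvec \<Rightarrow> 'i hvec set" where
  "Hsup V f = {\<eta>. mv V (tens f \<eta>) = tens f \<eta>}"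

definition Hsub :: "('i::finite \<times> 'i) hop \<Rightarrow> 'i hvec \<Rightarrow> 'i hvec set" where
  "Hsub V f = {\<eta>. mv V (tens \<eta> f) = tens \<eta> f}"

end

theory Submission
  imports Defs "HOL-Analysis.Analysis"
begin

section \<open>Basic matrix and vector algebra\<close>

lemma sum_pair: "(\<Sum>p\<in>(UNIV::('a::finite\<times>'b::finite) set). f p) = (\<Sum>a\<in>UNIV. \<Sum>b\<in>UNIV. f (a,b))"
proof -
  have "(\<Sum>p\<in>(UNIV::('a\<times>'b) set). f p) = (\<Sum>p\<in>UNIV \<times> UNIV. f p)" by simp
  also have "\<dots> = (\<Sum>a\<in>UNIV. \<Sum>b\<in>UNIV. f (a,b))" by (simp add: sum.cartesian_product)
  finally show ?thesis .
qed

lemma sum_delta_r [simp]: "(\<Sum>k\<in>(UNIV::_::finite set). f k * (if a = k then 1 else 0)) = (f a :: complex)"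
  by (subst sum.mono_neutral_cong_right[of UNIV "{a}"]) auto
lemma sum_delta_r2 [simp]: "(\<Sum>k\<in>(UNIV::_::finite set). f k * (if k = a then 1 else 0)) = (f a :: complex)"
  by (subst sum.mono_neutral_cong_right[of UNIV "{a}"]) auto
lemma sum_delta_l [simp]: "(\<Sum>k\<in>(UNIV::_::finite set). (if a = k then 1 else 0) * f k) = (f a :: complex)"
  by (subst sum.mono_neutral_cong_right[of UNIV "{a}"]) auto
lemma sum_delta_l2 [simp]: "(\<Sum>k\<in>(UNIV::_::finite set). (if k = a then 1 else 0) * f k) = (f a :: complex)"
  by (subst sum.mono_neutral_cong_right[of UNIV "{a}"]) auto

lemma mm_assoc: "mm (mm A B) C = mm A (mm B C)"
  unfolding mm_def
  apply (rule ext)+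
  apply (simp add: sum_distrib_left sum_distrib_right mult.assoc)
  by (rule sum.swap)

lemma mm_idop_left [simp]: "mm idop A = A"
  unfolding mm_def idop_def by simp
lemma mm_idop_right [simp]: "mm A idop = A"
  unfolding mm_def idop_def by simp
lemma adj_adj [simp]: "adj (adj A) = A"
  unfolding adj_def by simp
lemma adj_idop [simp]: "adj idop = idop"
  unfolding adj_def idop_def by (auto intro!: ext)
lemma adj_mm: "adj (mm A B) = mm (adj B) (adj A)"
  unfolding adj_def mm_def by (auto intro!: ext simp: mult.commute)
lemma mv_mm: "mv (mm A B) x = mv A (mv B x)"
  unfolding mv_def mm_def
  apply (rule ext)
  apply (simp add: sum_distrib_left sum_distrib_right mult.assoc)
  by (rule sum.swap)
lemma mv_idop [simp]: "mv idop x = x"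
  unfolding mv_def idop_def by simp
lemma mv_add: "mv A (\<lambda>i. x i + y i) = (\<lambda>i. mv A x i + mv A y i)"
  unfolding mv_def by (simp add: distrib_left sum.distrib)
lemma mv_diff: "mv A (\<lambda>i. x i - y i) = (\<lambda>i. mv A x i - mv A y i)"
  unfolding mv_def by (simp add: right_diff_distrib sum_subtractf)
lemma mv_scale: "mv A (\<lambda>i. c * x i) = (\<lambda>i. c * mv A x i)"
  unfolding mv_def by (simp add: sum_distrib_left mult.left_commute)
lemma mv_zero [simp]: "mv A (\<lambda>i. 0) = (\<lambda>i. 0)"
  unfolding mv_def by simp

definition vn2 :: "'i::finite hvec \<Rightarrow> real" where
  "vn2 x = (\<Sum>i\<in>UNIV. (cmod (x i))\<^sup>2)"

lemma vn2_nonneg: "vn2 x \<ge> 0"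
  unfolding vn2_def by (simp add: sum_nonneg)
lemma cinner_self: "cinner x x = of_real (vn2 x)"
  unfolding cinner_def vn2_def by (simp add: complex_mult_cnj cmod_def)
lemma hnorm_vn2: "hnorm x = sqrt (vn2 x)"
  unfolding hnorm_def vn2_def by simp
lemma vn2_zero_iff: "vn2 x = 0 \<longleftrightarrow> x = (\<lambda>_. 0)"
proof
  assume "vn2 x = 0"
  then have "\<forall>i\<in>UNIV. (cmod (x i))\<^sup>2 = 0"
    unfolding vn2_def by (subst sum_nonneg_eq_0_iff[symmetric]) auto
  then show "x = (\<lambda>_. 0)" by auto
qed (simp add: vn2_def)

lemma cinner_adj: "cinner (mv A x) y = cinner x (mv (adj A) y)"
proof -
  have "cinner (mv A x) y = (\<Sum>i\<in>UNIV. \<Sum>j\<in>UNIV. A i j * x j * cnj (y i))"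
    unfolding cinner_def mv_def by (simp add: sum_distrib_right)
  also have "\<dots> = (\<Sum>j\<in>UNIV. \<Sum>i\<in>UNIV. A i j * x j * cnj (y i))"
    by (rule sum.swap)
  also have "\<dots> = cinner x (mv (adj A) y)"
    unfolding cinner_def mv_def adj_def by (simp add: sum_distrib_left mult_ac)
  finally show ?thesis .
qed

lemma cinner_cnj: "cinner y x = cnj (cinner x y)"
  unfolding cinner_def by (simp add: mult.commute)

lemma cinner_add_left: "cinner (\<lambda>i. x i + y i) z = cinner x z + cinner y z"
  unfolding cinner_def by (simp add: distrib_right sum.distrib)
lemma cinner_diff_left: "cinner (\<lambda>i. x i - y i) z = cinner x z - cinner y z"
  unfolding cinner_def by (simp add: left_diff_distrib sum_subtractf)
lemma cinner_scale_left: "cinner (\<lambda>i. c * x i) z = c * cinner x z"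
  unfolding cinner_def by (simp add: sum_distrib_left mult.assoc)
lemma cinner_add_right: "cinner z (\<lambda>i. x i + y i) = cinner z x + cinner z y"
  unfolding cinner_def by (simp add: distrib_left sum.distrib)
lemma cinner_diff_right: "cinner z (\<lambda>i. x i - y i) = cinner z x - cinner z y"
  unfolding cinner_def by (simp add: right_diff_distrib sum_subtractf)
lemma cinner_scale_right: "cinner z (\<lambda>i. c * x i) = cnj c * cinner z x"
  unfolding cinner_def by (simp add: sum_distrib_left mult_ac)
lemma cinner_zero_left [simp]: "cinner (\<lambda>i. 0) z = 0"
  unfolding cinner_def by simp
lemma cinner_zero_right [simp]: "cinner z (\<lambda>i. 0) = 0"
  unfolding cinner_def by simp

section \<open>States\<close>

lemma lf_add: "linear_functional \<psi> \<Longrightarrow> \<psi> (\<lambda>i j. A i j + B i j) = \<psi> A + \<psi> B"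
  unfolding linear_functional_def by blast
lemma lf_scale: "linear_functional \<psi> \<Longrightarrow> \<psi> (\<lambda>i j. c * A i j) = c * \<psi> A"
  unfolding linear_functional_def by blast
lemma lf_zero: "linear_functional \<psi> \<Longrightarrow> \<psi> (\<lambda>i j. 0) = 0"
  using lf_scale[of \<psi> 0 "\<lambda>i j. 0"] by simp
lemma lf_diff: "linear_functional \<psi> \<Longrightarrow> \<psi> (\<lambda>i j. A i j - B i j) = \<psi> A - \<psi> B"
  using lf_add[of \<psi> A "\<lambda>i j. (-1) * B i j"] lf_scale[of \<psi> "-1" B] by simp
lemma lf_sum:
  assumes lf: "linear_functional \<psi>" and fin: "finite S"
  shows "\<psi> (\<lambda>i j. \<Sum>k\<in>S. f k i j) = (\<Sum>k\<in>S. \<psi> (f k))"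
  using fin
proof (induction S rule: finite_induct)
  case empty then show ?case by (simp add: lf_zero[OF lf])
next
  case (insert x F)
  then show ?case using lf_add[OF lf, of "f x" "\<lambda>i j. \<Sum>k\<in>F. f k i j"] by simp
qed

definition tov :: "('i::finite \<Rightarrow> complex) \<Rightarrow> complex^'i" where "tov x = (\<chi> i. x i)"
lemma inner_c: "inner (a::complex) b = Re (a * cnj b)"
  by (simp add: inner_complex_def)
lemma inner_tov: "inner (tov x) (tov y) = Re (cinner x y)"
  unfolding tov_def cinner_def inner_vec_def by (simp add: inner_c)


lemma mm_expand:
  "mm (adj (\<lambda>i j. A i j + c * B i j)) (\<lambda>i j. A i j + c * B i j) =
   (\<lambda>i j. mm (adj A) A i j + (c * mm (adj A) B i j + (cnj c * mm (adj B) A i j + (cnj c * c) * mm (adj B) B i j)))"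
  unfolding mm_def adj_def
  by (auto intro!: ext simp: algebra_simps sum.distrib sum_distrib_left)

lemma lf4:
  assumes "linear_functional \<psi>"
  shows "\<psi> (\<lambda>i j. P i j + (c1 * Q i j + (c2 * R i j + c3 * S i j))) = \<psi> P + c1 * \<psi> Q + c2 * \<psi> R + c3 * \<psi> S"
  using lf_add[OF assms, of P "\<lambda>i j. c1 * Q i j + (c2 * R i j + c3 * S i j)"]
    lf_add[OF assms, of "\<lambda>i j. c1 * Q i j" "\<lambda>i j. c2 * R i j + c3 * S i j"]
    lf_add[OF assms, of "\<lambda>i j. c2 * R i j" "\<lambda>i j. c3 * S i j"]
    lf_scale[OF assms, of c1 Q] lf_scale[OF assms, of c2 R] lf_scale[OF assms, of c3 S]
  by simp

lemma state_lf: "is_state \<psi> \<Longrightarrow> linear_functional \<psi>"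
  unfolding is_state_def by blast
lemma state_one: "is_state \<psi> \<Longrightarrow> \<psi> idop = 1"
  unfolding is_state_def by blast
lemma state_pos_Im: "is_state \<psi> \<Longrightarrow> Im (\<psi> (mm (adj A) A)) = 0"
  unfolding is_state_def by blast
lemma state_pos_Re: "is_state \<psi> \<Longrightarrow> Re (\<psi> (mm (adj A) A)) \<ge> 0"
  unfolding is_state_def by blast

lemma state_herm:
  assumes st: "is_state \<psi>"
  shows "\<psi> (adj X) = cnj (\<psi> X)"
proof -
  have lf: "linear_functional \<psi>" using st by (rule state_lf)
  have e1: "\<psi> (mm (adj (\<lambda>i j. idop i j + 1 * X i j)) (\<lambda>i j. idop i j + 1 * X i j)) =
      1 + \<psi> X + \<psi> (adj X) + \<psi> (mm (adj X) X)"
    unfolding mm_expand lf4[OF lf] by (simp add: state_one[OF st])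
  have e2: "\<psi> (mm (adj (\<lambda>i j. idop i j + \<i> * X i j)) (\<lambda>i j. idop i j + \<i> * X i j)) =
      1 + \<i> * \<psi> X - \<i> * \<psi> (adj X) + \<psi> (mm (adj X) X)"
    unfolding mm_expand lf4[OF lf]
    apply (simp only: adj_idop mm_idop_left mm_idop_right state_one[OF st] complex_cnj_i)
    by (simp add: algebra_simps)
  have i1: "Im (1 + \<psi> X + \<psi> (adj X) + \<psi> (mm (adj X) X)) = 0"
    using state_pos_Im[OF st, of "\<lambda>i j. idop i j + 1 * X i j"] unfolding e1 .
  have i2: "Im (1 + \<i> * \<psi> X - \<i> * \<psi> (adj X) + \<psi> (mm (adj X) X)) = 0"
    using state_pos_Im[OF st, of "\<lambda>i j. idop i j + \<i> * X i j"] unfolding e2 .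
  have i3: "Im (\<psi> (mm (adj X) X)) = 0" using state_pos_Im[OF st] .
  show ?thesis
    using i1 i2 i3 by (intro complex_eqI) auto
qed

lemma state_kernel:
  assumes st: "is_state \<psi>" and y: "\<psi> (mm (adj Y) Y) = 0"
  shows "\<psi> (mm Z Y) = 0"
proof -
  have lf: "linear_functional \<psi>" using st by (rule state_lf)
  define c where "c = \<psi> (mm Z Y)"
  define q where "q = Re (\<psi> (mm Z (adj Z)))"
  have q0: "q \<ge> 0" unfolding q_def using state_pos_Re[OF st, of "adj Z"] by simp
  have qI: "Im (\<psi> (mm Z (adj Z))) = 0" using state_pos_Im[OF st, of "adj Z"] by simp
  have hz: "\<psi> (mm (adj Y) (adj Z)) = cnj c"
    unfolding c_def using state_herm[OF st, of "mm Z Y"] by (simp add: adj_mm)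
  define s :: real where "s = 1 / (q + 1)"
  have s0: "s > 0" unfolding s_def using q0 by simp
  have sq: "s * q < 1" unfolding s_def using q0 by (simp add: field_simps)
  define t where "t = - (of_real s * c)"
  have val: "\<psi> (mm (adj (\<lambda>i j. Y i j + t * adj Z i j)) (\<lambda>i j. Y i j + t * adj Z i j)) =
     t * cnj c + cnj t * c + cnj t * t * \<psi> (mm Z (adj Z))"
    unfolding mm_expand lf4[OF lf] by (simp add: y hz c_def)
  have "Re (t * cnj c + cnj t * c + cnj t * t * \<psi> (mm Z (adj Z))) \<ge> 0"
    using state_pos_Re[OF st, of "\<lambda>i j. Y i j + t * adj Z i j"] unfolding val .
  moreover have "\<psi> (mm Z (adj Z)) = of_real q"
    using qI unfolding q_def by (simp add: complex_eq_iff)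
  ultimately have "Re (t * cnj c + cnj t * c + cnj t * t * of_real q) \<ge> 0" by simp
  then have "-2 * s * ((Re c)\<^sup>2 + (Im c)\<^sup>2) + s * s * ((Re c)\<^sup>2 + (Im c)\<^sup>2) * q \<ge> 0"
    unfolding t_def by (simp add: algebra_simps power2_eq_square)
  then have "s * ((Re c)\<^sup>2 + (Im c)\<^sup>2) * (s * q - 2) \<ge> 0"
    by (simp add: algebra_simps)
  then have "((Re c)\<^sup>2 + (Im c)\<^sup>2) * (s * q - 2) \<ge> 0"
    using s0 by (simp add: zero_le_mult_iff mult.assoc)
  moreover have "s * q - 2 < 0" using sq by simp
  ultimately have "(Re c)\<^sup>2 + (Im c)\<^sup>2 \<le> 0"
    by (simp add: zero_le_mult_iff)
  then have "Re c = 0 \<and> Im c = 0"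
    by (smt (verit) zero_le_power2 power_zero_numeral zero_eq_power2)
  then have "c = 0" by (simp add: complex_eq_iff)
  then show ?thesis unfolding c_def by simp
qed

lemma state_kernel_adj:
  assumes st: "is_state \<psi>" and y: "\<psi> (mm (adj Y) Y) = 0"
  shows "\<psi> (mm (adj Y) Z) = 0"
proof -
  have "\<psi> (mm (adj Z) Y) = 0" by (rule state_kernel[OF st y])
  then have "cnj (\<psi> (mm (adj Z) Y)) = 0" by simp
  then show ?thesis using state_herm[OF st, of "mm (adj Z) Y"] by (simp add: adj_mm)
qed


section \<open>Generic facts about a unitary W and the slice map\<close>

definition XX :: "('i::finite \<times> 'i) hop \<Rightarrow> 'i hvec \<Rightarrow> 'i \<Rightarrow> 'i hop" where
  "XX W w b = (\<lambda>a a'. \<Sum>b'\<in>UNIV. W (a,b) (a',b') * w b')"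

lemma Lslice_mv:
  assumes lf: "linear_functional \<psi>"
  shows "mv (Lslice W \<psi>) w b = \<psi> (XX W w b)"
proof -
  have "\<psi> (XX W w b) = \<psi> (\<lambda>a a'. \<Sum>b'\<in>UNIV. w b' * W (a,b) (a',b'))"
    unfolding XX_def by (simp add: mult.commute)
  also have "\<dots> = (\<Sum>b'\<in>UNIV. \<psi> (\<lambda>a a'. w b' * W (a,b) (a',b')))"
    by (rule lf_sum[OF lf, of UNIV "\<lambda>b' a a'. w b' * W (a,b) (a',b')", simplified])
  also have "\<dots> = (\<Sum>b'\<in>UNIV. w b' * \<psi> (\<lambda>a a'. W (a,b) (a',b')))"
    by (simp add: lf_scale[OF lf])
  finally show ?thesis unfolding mv_def Lslice_def by (simp add: mult.commute)
qed

lemma W_tens: "mv W (tens \<xi> \<eta>) (a,b) = mv (XX W \<eta> b) \<xi> a"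
  unfolding mv_def tens_def XX_def
  by (simp add: sum_pair sum_distrib_left mult_ac)

lemma cinner_tens: "cinner (tens x y) (tens x' y') = cinner x x' * cinner y y'"
  unfolding cinner_def tens_def
  by (simp add: sum_pair sum_product mult_ac)

lemma unitary_cinner:
  assumes "unitary_op W"
  shows "cinner (mv W x) (mv W y) = cinner x y"
  using assms unfolding unitary_op_def
  by (simp add: cinner_adj mv_mm[symmetric])

lemma unitary_vn2:
  assumes "unitary_op W"
  shows "vn2 (mv W x) = vn2 x"
  using unitary_cinner[OF assms, of x x] by (simp add: cinner_self)

lemma unitary_inv:
  assumes "unitary_op W"
  shows "mv W (mv (adj W) x) = x" "mv (adj W) (mv W x) = x"
  using assms unfolding unitary_op_def by (simp_all add: mv_mm[symmetric])

definition dlt :: "'i \<Rightarrow> 'i hvec" where "dlt i = (\<lambda>k. if k = i then 1 else 0)"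

lemma mv_dlt: "mv A (dlt j) = (\<lambda>a. A a j)"
  unfolding mv_def dlt_def by (simp add: if_distrib cong: if_cong)

lemma cinner_dlt: "cinner (dlt j) (dlt i) = (if j = i then 1 else 0)"
  unfolding cinner_def dlt_def by (simp only: sum_delta_l2) simp

lemma sum_adjXX:
  assumes u: "unitary_op W"
  shows "(\<lambda>i j. \<Sum>b\<in>UNIV. mm (adj (XX W w b)) (XX W w' b) i j) = (\<lambda>i j. cinner w' w * idop i j)"
proof (intro ext)
  fix i j
  have "cinner (mv W (tens (dlt j) w')) (mv W (tens (dlt i) w)) =
        (\<Sum>a\<in>UNIV. \<Sum>b\<in>UNIV. adj (XX W w b) i a * XX W w' b a j)"
    unfolding cinner_def
    by (simp add: sum_pair W_tens mv_dlt adj_def mult.commute)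
  also have "\<dots> = (\<Sum>b\<in>UNIV. \<Sum>a\<in>UNIV. adj (XX W w b) i a * XX W w' b a j)"
    by (rule sum.swap)
  also have "\<dots> = (\<Sum>b\<in>UNIV. mm (adj (XX W w b)) (XX W w' b) i j)"
    unfolding mm_def by simp
  finally have "cinner (mv W (tens (dlt j) w')) (mv W (tens (dlt i) w)) =
        (\<Sum>b\<in>UNIV. mm (adj (XX W w b)) (XX W w' b) i j)" .
  moreover have "cinner (mv W (tens (dlt j) w')) (mv W (tens (dlt i) w)) = cinner w' w * idop i j"
    unfolding unitary_cinner[OF u] cinner_tens cinner_dlt idop_def by auto
  ultimately show "(\<Sum>b\<in>UNIV. mm (adj (XX W w b)) (XX W w' b) i j) = cinner w' w * idop i j" by simp
qed


lemma mm_lin_right: "mm Z (\<lambda>i j. A i j + c * B i j) = (\<lambda>i j. mm Z A i j + c * mm Z B i j)"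
  unfolding mm_def by (auto intro!: ext simp: algebra_simps sum.distrib sum_distrib_left)
lemma mm_lin_left: "mm (\<lambda>i j. A i j + c * B i j) Z = (\<lambda>i j. mm A Z i j + c * mm B Z i j)"
  unfolding mm_def by (auto intro!: ext simp: algebra_simps sum.distrib sum_distrib_left)
lemma adj_lin: "adj (\<lambda>i j. A i j + c * B i j) = (\<lambda>i j. adj A i j + cnj c * adj B i j)"
  unfolding adj_def by auto

lemma sum_real_nonneg_zero:
  fixes r :: "'a \<Rightarrow> complex"
  assumes fin: "finite S" and re: "\<And>b. b \<in> S \<Longrightarrow> Im (r b) = 0 \<and> Re (r b) \<ge> 0"
  shows "Re (\<Sum>b\<in>S. r b) \<ge> 0 \<and> Im (\<Sum>b\<in>S. r b) = 0 \<and> ((\<Sum>b\<in>S. r b) = 0 \<longrightarrow> (\<forall>b\<in>S. r b = 0))"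
proof -
  have Re0: "Re (\<Sum>b\<in>S. r b) = (\<Sum>b\<in>S. Re (r b))" by (simp add: Re_sum)
  have Im0: "Im (\<Sum>b\<in>S. r b) = 0" using re by (simp add: Im_sum)
  have "(\<Sum>b\<in>S. Re (r b)) \<ge> 0" using re by (simp add: sum_nonneg)
  moreover have "(\<Sum>b\<in>S. r b) = 0 \<longrightarrow> (\<forall>b\<in>S. r b = 0)"
  proof
    assume "(\<Sum>b\<in>S. r b) = 0"
    then have "(\<Sum>b\<in>S. Re (r b)) = 0" using Re0 by simp
    then have "\<forall>b\<in>S. Re (r b) = 0" using re fin by (subst sum_nonneg_eq_0_iff[symmetric]) auto
    then show "\<forall>b\<in>S. r b = 0" using re by (auto simp: complex_eq_iff)
  qed
  ultimately show ?thesis using Re0 Im0 by simp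
qed

definition Yres :: "('i::finite \<times> 'i) hop \<Rightarrow> ('i hop \<Rightarrow> complex) \<Rightarrow> 'i hvec \<Rightarrow> 'i \<Rightarrow> 'i hop" where
  "Yres W \<psi> w b = (\<lambda>i j. XX W w b i j + (- mv (Lslice W \<psi>) w b) * idop i j)"

lemma key0:
  assumes u: "unitary_op W" and st: "is_state \<psi>"
  shows "vn2 (mv (Lslice W \<psi>) w) \<le> vn2 w"
    and "vn2 (mv (Lslice W \<psi>) w) = vn2 w \<Longrightarrow> \<psi> (mm (adj (Yres W \<psi> w b)) (Yres W \<psi> w b)) = 0"
proof -
  have lf: "linear_functional \<psi>" using st by (rule state_lf)
  let ?T = "Lslice W \<psi>"
  define t where "t b = mv ?T w b" for b
  have tX: "\<psi> (XX W w b) = t b" for b unfolding t_def by (simp add: Lslice_mv[OF lf])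
  have hX: "\<psi> (adj (XX W w b)) = cnj (t b)" for b using state_herm[OF st] tX by simp
  have eachY: "\<psi> (mm (adj (Yres W \<psi> w b)) (Yres W \<psi> w b)) = \<psi> (mm (adj (XX W w b)) (XX W w b)) - cnj (t b) * t b" for b
    unfolding Yres_def mm_expand lf4[OF lf] t_def[symmetric]
    by (simp add: tX hX state_one[OF st])
  have sumX: "(\<Sum>b\<in>UNIV. \<psi> (mm (adj (XX W w b)) (XX W w b))) = of_real (vn2 w)"
  proof -
    have "(\<Sum>b\<in>UNIV. \<psi> (mm (adj (XX W w b)) (XX W w b))) = \<psi> (\<lambda>i j. \<Sum>b\<in>UNIV. mm (adj (XX W w b)) (XX W w b) i j)"
      by (rule lf_sum[OF lf, symmetric]) simp
    also have "\<dots> = \<psi> (\<lambda>i j. cinner w w * idop i j)" by (simp add: sum_adjXX[OF u])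
    also have "\<dots> = cinner w w" by (simp add: lf_scale[OF lf] state_one[OF st])
    finally show ?thesis by (simp add: cinner_self)
  qed
  have sumt: "(\<Sum>b\<in>UNIV. cnj (t b) * t b) = of_real (vn2 (mv ?T w))"
    unfolding t_def using cinner_self[of "mv ?T w"] unfolding cinner_def by (simp add: mult.commute)
  have total: "(\<Sum>b\<in>UNIV. \<psi> (mm (adj (Yres W \<psi> w b)) (Yres W \<psi> w b))) = of_real (vn2 w - vn2 (mv ?T w))"
    by (simp add: eachY sum_subtractf sumX sumt)
  have pos: "Im (\<psi> (mm (adj (Yres W \<psi> w b)) (Yres W \<psi> w b))) = 0 \<and> Re (\<psi> (mm (adj (Yres W \<psi> w b)) (Yres W \<psi> w b))) \<ge> 0" for b
    using state_pos_Im[OF st] state_pos_Re[OF st] by blast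
  note S = sum_real_nonneg_zero[of UNIV "\<lambda>b. \<psi> (mm (adj (Yres W \<psi> w b)) (Yres W \<psi> w b))", OF finite pos]
  show "vn2 (mv ?T w) \<le> vn2 w" using S total by simp
  assume "vn2 (mv ?T w) = vn2 w"
  then show "\<psi> (mm (adj (Yres W \<psi> w b)) (Yres W \<psi> w b)) = 0" using S total by simp
qed

lemma key:
  assumes u: "unitary_op W" and st: "is_state \<psi>" and iso: "vn2 (mv (Lslice W \<psi>) w) = vn2 w"
  shows "\<psi> (mm Z (XX W w b)) = mv (Lslice W \<psi>) w b * \<psi> Z"
    and "\<psi> (mm (adj (XX W w b)) Z) = cnj (mv (Lslice W \<psi>) w b) * \<psi> Z"
proof -
  have lf: "linear_functional \<psi>" using st by (rule state_lf)
  let ?t = "mv (Lslice W \<psi>) w b"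
  have Y0: "\<psi> (mm (adj (Yres W \<psi> w b)) (Yres W \<psi> w b)) = 0" by (rule key0(2)[OF u st iso])
  have XY: "XX W w b = (\<lambda>i j. Yres W \<psi> w b i j + ?t * idop i j)"
    unfolding Yres_def by auto
  show "\<psi> (mm Z (XX W w b)) = ?t * \<psi> Z"
    unfolding XY mm_lin_right by (simp add: lf_add[OF lf] lf_scale[OF lf] state_kernel[OF st Y0])
  show "\<psi> (mm (adj (XX W w b)) Z) = cnj ?t * \<psi> Z"
    unfolding XY adj_lin mm_lin_left by (simp add: lf_add[OF lf] lf_scale[OF lf] state_kernel_adj[OF st Y0])
qed


lemma sum_triple: "(\<Sum>p\<in>(UNIV::('a::finite\<times>'b::finite\<times>'c::finite) set). f p) = (\<Sum>a\<in>UNIV. \<Sum>b\<in>UNIV. \<Sum>c\<in>UNIV. f (a,b,c))"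
  by (simp add: sum_pair)

lemma dl1: "(x::complex) * (if P then 1 else 0) = (if P then x else 0)" by simp
lemma dl2: "(if P then 1 else 0) * (x::complex) = (if P then x else 0)" by simp
lemma dl3: "(if P then x else 0) * (y::complex) = (if P then x * y else 0)" by simp
lemma dl4: "(y::complex) * (if P then x else 0) = (if P then y * x else 0)" by simp
lemma dl5: "(\<Sum>k\<in>S. if P then f k else (0::complex)) = (if P then (\<Sum>k\<in>S. f k) else 0)" by simp
lemmas dls = dl1 dl2 dl3 dl4 sum.delta sum.delta'

lemma fun3_eq: "(\<And>a b c a' b' c'. F (a,b,c) (a',b',c') = G (a,b,c) (a',b',c')) \<Longrightarrow> F = G"
  by (intro ext) auto

lemma leg12_mm: "mm (leg12 A) (leg12 B) = leg12 (mm A B)"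
  apply (rule fun3_eq)
  apply (simp only: mm_def leg12_def sum_triple sum_pair split)
  apply (simp add: dls sum_distrib_right mult.assoc)
  done

lemma dl6: "cnj (if P then x else 0) = (if P then cnj x else 0)" by simp
lemmas dls2 = dls dl5 dl6

lemma mm_leg23_l: "mm (leg23 A) M (a,b,c) q = (\<Sum>y\<in>UNIV. \<Sum>z\<in>UNIV. A (b,c) (y,z) * M (a,y,z) q)"
  by (simp add: mm_def leg23_def sum_triple dls2 sum_distrib_right mult_ac)
lemma mm_leg12_l: "mm (leg12 A) M (a,b,c) q = (\<Sum>x\<in>UNIV. \<Sum>y\<in>UNIV. A (a,b) (x,y) * M (x,y,c) q)"
  by (simp add: mm_def leg12_def sum_triple dls2 sum_distrib_right mult_ac)
lemma mm_leg13_l: "mm (leg13 A) M (a,b,c) q = (\<Sum>x\<in>UNIV. \<Sum>z\<in>UNIV. A (a,c) (x,z) * M (x,b,z) q)"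
  by (simp add: mm_def leg13_def sum_triple dls2 sum_distrib_right mult_ac)
lemma mm_adj_leg23_l: "mm (adj (leg23 A)) M (a,b,c) q = (\<Sum>y\<in>UNIV. \<Sum>z\<in>UNIV. cnj (A (y,z) (b,c)) * M (a,y,z) q)"
  by (simp add: mm_def adj_def leg23_def sum_triple dls2 sum_distrib_right mult_ac)
lemma mm_adj_leg12_l: "mm (adj (leg12 A)) M (a,b,c) q = (\<Sum>x\<in>UNIV. \<Sum>y\<in>UNIV. cnj (A (x,y) (a,b)) * M (x,y,c) q)"
  by (simp add: mm_def adj_def leg12_def sum_triple dls2 sum_distrib_right mult_ac)
lemma leg23_ev: "leg23 A (a,b,c) (a',b',c') = A (b,c) (b',c') * (if a = a' then 1 else 0)"
  by (simp add: leg23_def)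
lemma leg12_ev: "leg12 A (a,b,c) (a',b',c') = A (a,b) (a',b') * (if c = c' then 1 else 0)"
  by (simp add: leg12_def)
lemma leg13_ev: "leg13 A (a,b,c) (a',b',c') = A (a,c) (a',c') * (if b = b' then 1 else 0)"
  by (simp add: leg13_def)

lemma leg23_mm: "mm (leg23 A) (leg23 B) = leg23 (mm A B)"
  apply (rule fun3_eq)
  by (simp add: mm_leg23_l leg23_ev mm_def dls2 sum_pair sum_distrib_right mult_ac)

lemma leg12_adj: "adj (leg12 A) = leg12 (adj A)"
  by (rule fun3_eq) (simp add: adj_def leg12_def)
lemma leg23_adj: "adj (leg23 A) = leg23 (adj A)"
  by (rule fun3_eq) (simp add: adj_def leg23_def)
lemma leg12_id: "leg12 idop = idop"
  by (rule fun3_eq) (simp add: idop_def leg12_def)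
lemma leg23_id: "leg23 idop = idop"
  by (rule fun3_eq) (simp add: idop_def leg23_def)

lemma leg12_unitary: "unitary_op W \<Longrightarrow> unitary_op (leg12 W)"
  unfolding unitary_op_def by (simp add: leg12_adj leg12_mm leg12_id)
lemma leg23_unitary: "unitary_op W \<Longrightarrow> unitary_op (leg23 W)"
  unfolding unitary_op_def by (simp add: leg23_adj leg23_mm leg23_id)

lemma pent_P:
  assumes "multiplicative_unitary W"
  shows "(\<Sum>x\<in>UNIV. \<Sum>y\<in>UNIV. \<Sum>w\<in>UNIV. W (u,B) (x,y) * W (x,C) (u',w) * W (y,w) (B',C')) =
         (\<Sum>y\<in>UNIV. W (B,C) (y,C') * W (u,y) (u',B'))"
proof -
  have e: "mm (leg12 W) (mm (leg13 W) (leg23 W)) (u,B,C) (u',B',C') = mm (leg23 W) (leg12 W) (u,B,C) (u',B',C')"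
    using assms unfolding multiplicative_unitary_def by (simp add: mm_assoc)
  show ?thesis using e
    by (simp add: mm_leg12_l mm_leg13_l mm_leg23_l leg23_ev leg12_ev dls2 sum_distrib_left mult_ac)
qed

lemma pent_Q:
  assumes "multiplicative_unitary W"
  shows "(\<Sum>w\<in>UNIV. W (a,c) (a',w) * W (b,w) (b',c')) =
         (\<Sum>x\<in>UNIV. \<Sum>y\<in>UNIV. \<Sum>y'\<in>UNIV. cnj (W (x,y) (a,b)) * W (y,c) (y',c') * W (x,y') (a',b'))"
proof -
  have u: "unitary_op (leg12 W)" using assms unfolding multiplicative_unitary_def by (simp add: leg12_unitary)
  have p: "mm (mm (leg12 W) (leg13 W)) (leg23 W) = mm (leg23 W) (leg12 W)"
    using assms unfolding multiplicative_unitary_def by simp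
  have "mm (leg13 W) (leg23 W) = mm (mm (adj (leg12 W)) (leg12 W)) (mm (leg13 W) (leg23 W))"
    using u unfolding unitary_op_def by simp
  also have "\<dots> = mm (adj (leg12 W)) (mm (mm (leg12 W) (leg13 W)) (leg23 W))"
    by (simp add: mm_assoc)
  also have "\<dots> = mm (adj (leg12 W)) (mm (leg23 W) (leg12 W))" by (simp add: p)
  finally have e: "mm (leg13 W) (leg23 W) (a,b,c) (a',b',c') = mm (adj (leg12 W)) (mm (leg23 W) (leg12 W)) (a,b,c) (a',b',c')"
    by simp
  show ?thesis using e
    by (simp add: mm_adj_leg12_l mm_leg13_l mm_leg23_l leg23_ev leg12_ev dls2 sum_distrib_left mult_ac)
qed

lemma pent_P':
  assumes "multiplicative_unitary W"
  shows "(\<Sum>y\<in>UNIV. cnj (W (b',c') (y,c)) * W (u,b) (u',y)) =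
         (\<Sum>y\<in>UNIV. \<Sum>z\<in>UNIV. \<Sum>x\<in>UNIV. cnj (W (y,z) (b,c)) * W (u,y) (x,b') * W (x,z) (u',c'))"
proof -
  have u: "unitary_op (leg23 W)" using assms unfolding multiplicative_unitary_def by (simp add: leg23_unitary)
  have p: "mm (mm (leg12 W) (leg13 W)) (leg23 W) = mm (leg23 W) (leg12 W)"
    using assms unfolding multiplicative_unitary_def by simp
  have "mm (leg12 W) (adj (leg23 W)) = mm (mm (adj (leg23 W)) (leg23 W)) (mm (leg12 W) (adj (leg23 W)))"
    using u unfolding unitary_op_def by simp
  also have "\<dots> = mm (adj (leg23 W)) (mm (mm (leg23 W) (leg12 W)) (adj (leg23 W)))"
    by (simp add: mm_assoc)
  also have "\<dots> = mm (adj (leg23 W)) (mm (mm (mm (leg12 W) (leg13 W)) (leg23 W)) (adj (leg23 W)))" by (simp add: p)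
  also have "\<dots> = mm (adj (leg23 W)) (mm (leg12 W) (mm (leg13 W) (mm (leg23 W) (adj (leg23 W)))))"
    by (simp add: mm_assoc)
  also have "\<dots> = mm (adj (leg23 W)) (mm (leg12 W) (leg13 W))"
    using u unfolding unitary_op_def by simp
  finally have e: "mm (leg12 W) (adj (leg23 W)) (u,b,c) (u',b',c') = mm (adj (leg23 W)) (mm (leg12 W) (leg13 W)) (u,b,c) (u',b',c')"
    by simp
  have l: "mm (leg12 W) (adj (leg23 W)) (u,b,c) (u',b',c') = (\<Sum>y\<in>UNIV. cnj (W (b',c') (y,c)) * W (u,b) (u',y))"
    by (simp add: mm_leg12_l adj_def leg23_ev dls2 mult_ac)
  show ?thesis using e unfolding l
    by (simp add: mm_adj_leg23_l mm_leg12_l mm_leg13_l leg13_ev dls2 sum_distrib_left mult_ac)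
qed


locale mu_setting =
  fixes W :: "('i::finite \<times> 'i) hop" and \<psi> :: "'i hop \<Rightarrow> complex"
  assumes mu: "multiplicative_unitary W" and st: "is_state \<psi>"
begin

abbreviation "T \<equiv> Lslice W \<psi>"

lemma unit: "unitary_op W" using mu unfolding multiplicative_unitary_def by blast
lemma lf: "linear_functional \<psi>" using st by (rule state_lf)

lemma contr: "vn2 (mv T w) \<le> vn2 w"
  by (rule key0(1)[OF unit st])

lemma T_XX: "mv T w b = \<psi> (XX W w b)"
  by (rule Lslice_mv[OF lf])

lemma iso_inner:
  assumes iso: "vn2 (mv T w) = vn2 w"
  shows "cinner (mv T y) (mv T w) = cinner y w"
proof -
  have "cinner (mv T y) (mv T w) = (\<Sum>b\<in>UNIV. \<psi> (mm (adj (XX W w b)) (XX W y b)))"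
    unfolding cinner_def using key(2)[OF unit st iso] by (simp add: T_XX mult.commute)
  also have "\<dots> = \<psi> (\<lambda>i j. \<Sum>b\<in>UNIV. mm (adj (XX W w b)) (XX W y b) i j)"
    by (rule lf_sum[OF lf, symmetric]) simp
  also have "\<dots> = \<psi> (\<lambda>i j. cinner y w * idop i j)" by (simp add: sum_adjXX[OF unit])
  also have "\<dots> = cinner y w" by (simp add: lf_scale[OF lf] state_one[OF st])
  finally show ?thesis .
qed

lemma vn2_scale: "vn2 (\<lambda>i. z * w i) = (cmod z)\<^sup>2 * vn2 w"
  unfolding vn2_def by (simp add: norm_mult power_mult_distrib sum_distrib_left)

lemma eig_iso:
  assumes "mv T w = (\<lambda>i. z * w i)" "cmod z = 1"
  shows "vn2 (mv T w) = vn2 w"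
  using assms by (simp add: vn2_scale)

lemma eig_orth:
  assumes e1: "mv T w = (\<lambda>i. z * w i)" "cmod z = 1"
      and e2: "mv T w' = (\<lambda>i. z' * w' i)" "cmod z' = 1" and ne: "z \<noteq> z'"
  shows "cinner w w' = 0"
proof -
  have "cinner (mv T w) (mv T w') = cinner w w'"
    by (rule iso_inner[OF eig_iso[OF e2]])
  then have "z * cnj z' * cinner w w' = cinner w w'"
    using e1 e2 by (simp add: cinner_scale_left cinner_scale_right mult_ac)
  moreover have "z * cnj z' \<noteq> 1"
  proof
    assume "z * cnj z' = 1"
    then have "z * cnj z' * z' = z'" by simp
    moreover have "cnj z' * z' = 1" using e2(2) by (simp add: complex_norm_square[symmetric] mult.commute)
    ultimately show False using ne by (simp add: mult.assoc)
  qed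
  ultimately show ?thesis
    by (metis mult_cancel_right1 mult.commute)
qed


lemma tov_inj: "tov x = tov y \<Longrightarrow> x = y"
  unfolding tov_def by (auto simp: vec_eq_iff)
lemma tov_zero: "tov x = 0 \<Longrightarrow> x = (\<lambda>_. 0)"
  unfolding tov_def by (auto simp: vec_eq_iff)

lemma eigvals_finite: "finite (unimodular_eigenvalues T)"
proof -
  let ?G = "unimodular_eigenvalues T"
  define v where "v z = (SOME x. x \<noteq> (\<lambda>_. 0) \<and> mv T x = (\<lambda>i. z * x i))" for z
  have v: "v z \<noteq> (\<lambda>_. 0) \<and> mv T (v z) = (\<lambda>i. z * v z i) \<and> cmod z = 1" if "z \<in> ?G" for z
  proof -
    from that have ex: "\<exists>x. x \<noteq> (\<lambda>_. 0) \<and> mv T x = (\<lambda>i. z * x i)" and c: "cmod z = 1"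
      unfolding unimodular_eigenvalues_def by auto
    have "v z \<noteq> (\<lambda>_. 0) \<and> mv T (v z) = (\<lambda>i. z * v z i)"
      unfolding v_def by (rule someI_ex[OF ex])
    then show ?thesis using c by blast
  qed
  have orth: "cinner (v z) (v z') = 0" if "z \<in> ?G" "z' \<in> ?G" "z \<noteq> z'" for z z'
    using v[OF that(1)] v[OF that(2)] eig_orth that(3) by blast
  have inj: "inj_on (\<lambda>z. tov (v z)) ?G"
  proof (rule inj_onI)
    fix z z' assume zz: "z \<in> ?G" "z' \<in> ?G" "tov (v z) = tov (v z')"
    show "z = z'"
    proof (rule ccontr)
      assume "z \<noteq> z'"
      then have "cinner (v z) (v z') = 0" using orth zz by blast
      then have "cinner (v z) (v z) = 0" using tov_inj[OF zz(3)] by simp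
      then have "vn2 (v z) = 0" by (simp add: cinner_self)
      then show False using v[OF zz(1)] by (simp add: vn2_zero_iff)
    qed
  qed
  have po: "pairwise orthogonal ((\<lambda>z. tov (v z)) ` ?G)"
    unfolding pairwise_def orthogonal_def
    by (auto simp: inner_tov intro: orth[THEN arg_cong[where f=Re], simplified])
  have nz: "0 \<notin> (\<lambda>z. tov (v z)) ` ?G"
    using v tov_zero by fastforce
  have "finite ((\<lambda>z. tov (v z)) ` ?G)"
    using independent_bound[OF pairwise_orthogonal_independent[OF po nz]] by blast
  then show ?thesis using finite_imageD[OF _ inj] by blast
qed

end

lemma swap22: "(\<Sum>a\<in>(UNIV::'a::finite set). \<Sum>b\<in>(UNIV::'b::finite set). \<Sum>c\<in>(UNIV::'c::finite set). \<Sum>d\<in>(UNIV::'d::finite set). f a b c d) =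
  (\<Sum>c\<in>UNIV. \<Sum>d\<in>UNIV. \<Sum>a\<in>UNIV. \<Sum>b\<in>UNIV. f a b c d)"
proof -
  have "(\<Sum>a\<in>(UNIV::'a set). \<Sum>b\<in>(UNIV::'b set). \<Sum>c\<in>(UNIV::'c set). \<Sum>d\<in>(UNIV::'d set). f a b c d) =
    (\<Sum>p\<in>UNIV. \<Sum>q\<in>UNIV. f (fst p) (snd p) (fst q) (snd q))" by (simp add: sum_pair)
  also have "\<dots> = (\<Sum>q\<in>UNIV. \<Sum>p\<in>UNIV. f (fst p) (snd p) (fst q) (snd q))" by (rule sum.swap)
  also have "\<dots> = (\<Sum>c\<in>UNIV. \<Sum>d\<in>UNIV. \<Sum>a\<in>UNIV. \<Sum>b\<in>UNIV. f a b c d)" by (simp add: sum_pair)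
  finally show ?thesis .
qed

lemma swap12: "(\<Sum>x\<in>(UNIV::'a::finite set). \<Sum>a\<in>(UNIV::'b::finite set). \<Sum>b\<in>(UNIV::'c::finite set). f x a b) =
  (\<Sum>a\<in>UNIV. \<Sum>b\<in>UNIV. \<Sum>x\<in>UNIV. f x a b)"
proof -
  have "(\<Sum>x\<in>(UNIV::'a set). \<Sum>a\<in>(UNIV::'b set). \<Sum>b\<in>(UNIV::'c set). f x a b) =
    (\<Sum>x\<in>UNIV. \<Sum>q\<in>UNIV. f x (fst q) (snd q))" by (simp add: sum_pair)
  also have "\<dots> = (\<Sum>q\<in>UNIV. \<Sum>x\<in>UNIV. f x (fst q) (snd q))" by (rule sum.swap)
  also have "\<dots> = (\<Sum>a\<in>UNIV. \<Sum>b\<in>UNIV. \<Sum>x\<in>UNIV. f x a b)" by (simp add: sum_pair)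
  finally show ?thesis .
qed

definition blk :: "('i::finite \<times> 'i) hop \<Rightarrow> 'i \<Rightarrow> 'i \<Rightarrow> 'i hop" where
  "blk W p q = (\<lambda>s t. W (s,p) (t,q))"

lemma lf_sum2:
  assumes lf: "linear_functional \<psi>"
  shows "\<psi> (\<lambda>i j. \<Sum>a\<in>(UNIV::'a::finite set). \<Sum>b\<in>(UNIV::'b::finite set). f a b i j) = (\<Sum>a\<in>UNIV. \<Sum>b\<in>UNIV. \<psi> (f a b))"
proof -
  have "\<psi> (\<lambda>i j. \<Sum>a\<in>(UNIV::'a set). \<Sum>b\<in>(UNIV::'b set). f a b i j) = (\<Sum>a\<in>UNIV. \<psi> (\<lambda>i j. \<Sum>b\<in>(UNIV::'b set). f a b i j))"
    by (rule lf_sum[OF lf]) simp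
  also have "\<dots> = (\<Sum>a\<in>UNIV. \<Sum>b\<in>UNIV. \<psi> (f a b))"
    by (intro sum.cong refl lf_sum[OF lf]) simp
  finally show ?thesis .
qed

lemma mm_XX: "mm (XX W v y) (XX W v' z) = (\<lambda>u u'. \<Sum>c\<in>UNIV. \<Sum>a\<in>UNIV. (v c * v' a) * mm (blk W y c) (blk W z a) u u')"
proof (intro ext)
  fix u u'
  have "mm (XX W v y) (XX W v' z) u u' = (\<Sum>x\<in>UNIV. \<Sum>c\<in>UNIV. \<Sum>a\<in>UNIV. W (u,y) (x,c) * v c * (W (x,z) (u',a) * v' a))"
    unfolding mm_def XX_def by (simp add: sum_product)
  also have "\<dots> = (\<Sum>c\<in>UNIV. \<Sum>a\<in>UNIV. \<Sum>x\<in>UNIV. W (u,y) (x,c) * v c * (W (x,z) (u',a) * v' a))"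
    by (rule swap12)
  also have "\<dots> = (\<Sum>c\<in>UNIV. \<Sum>a\<in>UNIV. (v c * v' a) * mm (blk W y c) (blk W z a) u u')"
    unfolding mm_def blk_def by (simp add: sum_distrib_left mult_ac)
  finally show "mm (XX W v y) (XX W v' z) u u' = (\<Sum>c\<in>UNIV. \<Sum>a\<in>UNIV. (v c * v' a) * mm (blk W y c) (blk W z a) u u')" .
qed

context mu_setting
begin

lemma eig_prod:
  assumes e1: "mv T \<eta>1 = (\<lambda>i. z1 * \<eta>1 i)" "cmod z1 = 1"
      and e2: "mv T \<eta>2 = (\<lambda>i. z2 * \<eta>2 i)" "cmod z2 = 1"
      and n1: "\<eta>1 \<noteq> (\<lambda>_. 0)" and n2: "\<eta>2 \<noteq> (\<lambda>_. 0)"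
  shows "z1 * z2 \<in> unimodular_eigenvalues T"
proof -
  define \<Theta> where "\<Theta> = mv (adj W) (tens \<eta>2 \<eta>1)"
  have "\<Theta> \<noteq> (\<lambda>_. 0)"
  proof
    assume "\<Theta> = (\<lambda>_. 0)"
    then have "tens \<eta>2 \<eta>1 = (\<lambda>_. 0)" using unitary_inv(1)[OF unit, of "tens \<eta>2 \<eta>1"] unfolding \<Theta>_def by simp
    moreover obtain i where "\<eta>2 i \<noteq> 0" using n2 by auto
    moreover obtain j where "\<eta>1 j \<noteq> 0" using n1 by auto
    ultimately show False unfolding tens_def by (metis (no_types, lifting) case_prod_conv mult_eq_0_iff)
  qed
  then obtain c0 a0 where ca: "\<Theta> (c0,a0) \<noteq> 0" by (metis (full_types) ext surj_pair)
  define \<zeta> where "\<zeta> = (\<lambda>c. \<Theta> (c,a0))"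
  have \<zeta>nz: "\<zeta> \<noteq> (\<lambda>_. 0)" using ca unfolding \<zeta>_def by (metis)
  have \<zeta>v: "\<zeta> b' = (\<Sum>c'\<in>UNIV. \<Sum>a'\<in>UNIV. cnj (W (c',a') (b',a0)) * (\<eta>2 c' * \<eta>1 a'))" for b'
    unfolding \<zeta>_def \<Theta>_def mv_def adj_def tens_def by (simp add: sum_pair)
  have iso1: "vn2 (mv T \<eta>1) = vn2 \<eta>1" by (rule eig_iso[OF e1])
  have key1: "\<psi> (mm Z (XX W \<eta>1 z)) = z1 * \<eta>1 z * \<psi> Z" for Z z
    using key(1)[OF unit st iso1, of Z z] e1(1) by simp
  have "mv T \<zeta> b = z1 * z2 * \<zeta> b" for b
  proof -
    have S3: "(\<Sum>b'\<in>UNIV. cnj (W (c',a') (b',a0)) * \<psi> (blk W b b')) =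
       (\<Sum>y\<in>UNIV. \<Sum>z\<in>UNIV. cnj (W (y,z) (b,a0)) * \<psi> (mm (blk W y c') (blk W z a')))" for c' a'
    proof -
      have "(\<Sum>b'\<in>UNIV. cnj (W (c',a') (b',a0)) * \<psi> (blk W b b')) =
          \<psi> (\<lambda>u u'. \<Sum>b'\<in>UNIV. cnj (W (c',a') (b',a0)) * W (u,b) (u',b'))"
        by (subst lf_sum[OF lf]) (simp_all add: lf_scale[OF lf] blk_def)
      also have "\<dots> = \<psi> (\<lambda>u u'. \<Sum>y\<in>UNIV. \<Sum>z\<in>UNIV. cnj (W (y,z) (b,a0)) * mm (blk W y c') (blk W z a') u u')"
        using pent_P'[OF mu, of c' a' a0 _ b] 
        by (simp add: mm_def blk_def sum_distrib_left mult_ac)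
      also have "\<dots> = (\<Sum>y\<in>UNIV. \<Sum>z\<in>UNIV. cnj (W (y,z) (b,a0)) * \<psi> (mm (blk W y c') (blk W z a')))"
        by (simp add: lf_sum2[OF lf] lf_scale[OF lf])
      finally show ?thesis .
    qed
    have "mv T \<zeta> b = (\<Sum>b'\<in>UNIV. \<psi> (blk W b b') * \<zeta> b')"
      unfolding mv_def Lslice_def blk_def by simp
    also have "\<dots> = (\<Sum>b'\<in>UNIV. \<Sum>c'\<in>UNIV. \<Sum>a'\<in>UNIV. (\<eta>2 c' * \<eta>1 a') * (cnj (W (c',a') (b',a0)) * \<psi> (blk W b b')))"
      unfolding \<zeta>v by (simp add: sum_distrib_left mult_ac)
    also have "\<dots> = (\<Sum>c'\<in>UNIV. \<Sum>a'\<in>UNIV. \<Sum>b'\<in>UNIV. (\<eta>2 c' * \<eta>1 a') * (cnj (W (c',a') (b',a0)) * \<psi> (blk W b b')))"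
      by (rule swap12)
    also have "\<dots> = (\<Sum>c'\<in>UNIV. \<Sum>a'\<in>UNIV. (\<eta>2 c' * \<eta>1 a') * (\<Sum>y\<in>UNIV. \<Sum>z\<in>UNIV. cnj (W (y,z) (b,a0)) * \<psi> (mm (blk W y c') (blk W z a'))))"
      by (simp add: S3 sum_distrib_left[symmetric])
    also have "\<dots> = (\<Sum>c'\<in>UNIV. \<Sum>a'\<in>UNIV. \<Sum>y\<in>UNIV. \<Sum>z\<in>UNIV. cnj (W (y,z) (b,a0)) * ((\<eta>2 c' * \<eta>1 a') * \<psi> (mm (blk W y c') (blk W z a'))))"
      by (simp add: sum_distrib_left mult_ac)
    also have "\<dots> = (\<Sum>y\<in>UNIV. \<Sum>z\<in>UNIV. \<Sum>c'\<in>UNIV. \<Sum>a'\<in>UNIV. cnj (W (y,z) (b,a0)) * ((\<eta>2 c' * \<eta>1 a') * \<psi> (mm (blk W y c') (blk W z a'))))"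
      by (rule swap22)
    also have "\<dots> = (\<Sum>y\<in>UNIV. \<Sum>z\<in>UNIV. cnj (W (y,z) (b,a0)) * \<psi> (mm (XX W \<eta>2 y) (XX W \<eta>1 z)))"
      by (simp add: mm_XX lf_sum2[OF lf] lf_scale[OF lf] sum_distrib_left)
    also have "\<dots> = (\<Sum>y\<in>UNIV. \<Sum>z\<in>UNIV. cnj (W (y,z) (b,a0)) * (z1 * \<eta>1 z * (z2 * \<eta>2 y)))"
      by (simp add: key1 T_XX[symmetric] e2(1))
    also have "\<dots> = z1 * z2 * \<zeta> b"
      unfolding \<zeta>v by (simp add: sum_distrib_left mult_ac)
    finally show ?thesis .
  qed
  then have "mv T \<zeta> = (\<lambda>i. z1 * z2 * \<zeta> i)" by auto
  moreover have "cmod (z1 * z2) = 1" using e1(2) e2(2) by (simp add: norm_mult)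
  ultimately show ?thesis using \<zeta>nz unfolding unimodular_eigenvalues_def by blast
qed

end

lemma pow_cycle:
  fixes z :: complex
  assumes fin: "finite G" and cl: "\<And>x y. x \<in> G \<Longrightarrow> y \<in> G \<Longrightarrow> x * y \<in> G" and zG: "z \<in> G" and z0: "z \<noteq> 0"
  shows "\<exists>n>0. z ^ n = 1"
proof -
  have pw: "z ^ Suc k \<in> G" for k
    by (induction k) (use zG cl in auto)
  have "\<not> inj (\<lambda>k. z ^ Suc k)"
  proof
    assume inj: "inj (\<lambda>k. z ^ Suc k)"
    have "range (\<lambda>k. z ^ Suc k) \<subseteq> G" using pw by auto
    then have "finite (range (\<lambda>k. z ^ Suc k))" using fin finite_subset by blast
    then have "finite (UNIV :: nat set)" using finite_imageD[of "\<lambda>k. z ^ Suc k" UNIV] inj by blast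
    then show False by simp
  qed
  then obtain i j where ij: "i \<noteq> j" "z ^ Suc i = z ^ Suc j" unfolding inj_def by blast
  show ?thesis
  proof (cases "i < j")
    case True
    have "z ^ Suc i * z ^ (j - i) = z ^ Suc j" using True by (simp add: power_add[symmetric])
    then have "z ^ (j - i) = 1" using ij(2) z0 by simp
    then show ?thesis using True by (intro exI[of _ "j - i"]) simp
  next
    case False
    then have "j < i" using ij(1) by simp
    have "z ^ Suc j * z ^ (i - j) = z ^ Suc i" using \<open>j < i\<close> by (simp add: power_add[symmetric])
    then have "z ^ (i - j) = 1" using ij(2) z0 by simp
    then show ?thesis using \<open>j < i\<close> by (intro exI[of _ "i - j"]) simp
  qed
qed

lemma finite_group_U1:
  assumes fin: "finite G" and sub: "G \<subseteq> {z. cmod z = 1}" and one: "1 \<in> G"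
      and cl: "\<And>x y. x \<in> G \<Longrightarrow> y \<in> G \<Longrightarrow> x * y \<in> G"
  shows "finite_subgroup_U1 G" and "\<forall>z\<in>G. \<exists>n::nat. n > 0 \<and> z ^ n = 1"
proof -
  have roots: "\<exists>n>0. z ^ n = 1" if "z \<in> G" for z
  proof -
    have "z \<noteq> 0" using sub that by auto
    then show ?thesis using pow_cycle[OF fin cl that] by blast
  qed
  then show "\<forall>z\<in>G. \<exists>n::nat. n > 0 \<and> z ^ n = 1" by blast
  have inv: "inverse z \<in> G" if zG: "z \<in> G" for z
  proof -
    obtain n where n: "n > 0" "z ^ n = 1" using roots[OF zG] by blast
    have z0: "z \<noteq> 0" using sub zG by auto
    show ?thesis
    proof (cases n)
      case 0 then show ?thesis using n by simp
    next
      case (Suc m)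
      show ?thesis
      proof (cases m)
        case 0
        then have "z = 1" using n Suc by simp
        then show ?thesis using one by simp
      next
        case (Suc k)
        have pw: "z ^ Suc k' \<in> G" for k'
          by (induction k') (use zG cl in auto)
        have "z * z ^ m = 1" using n \<open>n = Suc m\<close> by simp
        then have "inverse z = z ^ m" using z0 by (simp add: field_simps)
        then show ?thesis using pw Suc by simp
      qed
    qed
  qed
  show "finite_subgroup_U1 G"
    unfolding finite_subgroup_U1_def using fin sub one cl inv by blast
qed

lemma common_exponent:
  fixes G :: "complex set"
  assumes fin: "finite G" and roots: "\<forall>z\<in>G. \<exists>n::nat. n > 0 \<and> z ^ n = 1"
  shows "\<exists>d::nat. d > 0 \<and> (\<forall>z\<in>G. z ^ d = 1)"
proof -
  define n :: "complex \<Rightarrow> nat" where "n z = (SOME n::nat. n > 0 \<and> z ^ n = 1)" for z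
  have nz: "n z > 0 \<and> z ^ n z = 1" if "z \<in> G" for z
    unfolding n_def using roots that by (metis (mono_tags, lifting) someI_ex)
  define d where "d = (\<Prod>z\<in>G. n z)"
  have "d > 0" unfolding d_def using nz fin by (simp add: prod_pos)
  moreover have "z ^ d = 1" if "z \<in> G" for z
  proof -
    have "n z dvd d" unfolding d_def using fin that by (rule dvd_prod_eqI) simp
    then obtain k where "d = n z * k" by blast
    then show ?thesis using nz[OF that] by (simp add: power_mult)
  qed
  ultimately show ?thesis by blast
qed

context mu_setting
begin

lemma XX_cofixed:
  assumes cof: "\<forall>\<xi>. mv W (tens \<xi> h0) = tens \<xi> h0"
  shows "XX W h0 b = (\<lambda>i j. h0 b * idop i j)"
proof (intro ext)
  fix i j
  have "XX W h0 b i j = mv (XX W h0 b) (dlt j) i" by (simp add: mv_dlt)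
  also have "\<dots> = mv W (tens (dlt j) h0) (i,b)" by (simp add: W_tens)
  also have "\<dots> = h0 b * idop i j" using cof by (simp add: tens_def dlt_def idop_def)
  finally show "XX W h0 b i j = h0 b * idop i j" .
qed

lemma cofixed_T:
  assumes cof: "\<forall>\<xi>. mv W (tens \<xi> h0) = tens \<xi> h0"
  shows "mv T h0 = h0"
  by (rule ext) (simp add: T_XX XX_cofixed[OF cof] lf_scale[OF lf] state_one[OF st])

lemma eigvals_group:
  assumes cof: "\<forall>\<xi>. mv W (tens \<xi> h0) = tens \<xi> h0" and h0: "h0 \<noteq> (\<lambda>_. 0)"
  shows "finite_subgroup_U1 (unimodular_eigenvalues T)"
    and "\<forall>z\<in>unimodular_eigenvalues T. \<exists>n::nat. n > 0 \<and> z ^ n = 1"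
proof -
  let ?G = "unimodular_eigenvalues T"
  have one: "1 \<in> ?G" using cofixed_T[OF cof] h0 unfolding unimodular_eigenvalues_def by auto
  have sub: "?G \<subseteq> {z. cmod z = 1}" unfolding unimodular_eigenvalues_def by auto
  have cl: "x * y \<in> ?G" if "x \<in> ?G" "y \<in> ?G" for x y
  proof -
    from that(1) obtain a where a: "a \<noteq> (\<lambda>_. 0)" "mv T a = (\<lambda>i. x * a i)" "cmod x = 1"
      unfolding unimodular_eigenvalues_def by blast
    from that(2) obtain b where b: "b \<noteq> (\<lambda>_. 0)" "mv T b = (\<lambda>i. y * b i)" "cmod y = 1"
      unfolding unimodular_eigenvalues_def by blast
    show ?thesis by (rule eig_prod[OF a(2,3) b(2,3) a(1) b(1)])
  qed
  show "finite_subgroup_U1 ?G" "\<forall>z\<in>?G. \<exists>n::nat. n > 0 \<and> z ^ n = 1"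
    using finite_group_U1[OF eigvals_finite sub one cl] by blast+
qed

end

lemma root_unity:
  assumes d: "d > (0::nat)"
  defines "\<omega> \<equiv> cis (2 * pi / real d)"
  shows "\<omega> ^ d = 1" "cmod \<omega> = 1" "\<And>k. 0 < k \<Longrightarrow> k < d \<Longrightarrow> \<omega> ^ k \<noteq> 1"
proof -
  show "\<omega> ^ d = 1" unfolding \<omega>_def Complex.DeMoivre using d by simp
  show "cmod \<omega> = 1" unfolding \<omega>_def by simp
  fix k :: nat assume k: "0 < k" "k < d"
  show "\<omega> ^ k \<noteq> 1"
  proof
    assume "\<omega> ^ k = 1"
    then have "cos (real k * (2 * pi / real d)) = 1"
      unfolding \<omega>_def Complex.DeMoivre by (metis cis.simps(1) one_complex.simps(1))
    then obtain n :: int where n: "real k * (2 * pi / real d) = real_of_int n * 2 * pi"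
      using cos_one_2pi_int by blast
    then have "real k / real d = n" using d by (simp add: field_simps)
    moreover have "0 < real k / real d" "real k / real d < 1" using k by auto
    ultimately have "0 < n" "n < 1" by linarith+
    then show False by simp
  qed
qed

lemma cspan_zero: "(\<lambda>_. 0) \<in> cspan E"
  unfolding cspan_def by (rule CollectI, rule exI[of _ "{}"]) auto
lemma cspan_base: "x \<in> E \<Longrightarrow> x \<in> cspan E"
  unfolding cspan_def by (rule CollectI, rule exI[of _ "{x}"], rule exI[of _ "\<lambda>_. 1"]) auto
lemma cspan_scale:
  assumes "x \<in> cspan E"
  shows "(\<lambda>i. a * x i) \<in> cspan E"
proof -
  obtain S c where S: "finite S" "S \<subseteq> E" "x = (\<lambda>i. \<Sum>v\<in>S. c v * v i)" using assms unfolding cspan_def by blast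
  have eq: "(\<lambda>i. a * x i) = (\<lambda>i. \<Sum>v\<in>S. (a * c v) * v i)"
    unfolding S(3) by (simp add: sum_distrib_left mult.assoc)
  show ?thesis unfolding cspan_def
    by (rule CollectI, rule exI[of _ S], rule exI[of _ "\<lambda>v. a * c v"]) (use S eq in simp)
qed
lemma cspan_add:
  assumes "x \<in> cspan E" "y \<in> cspan E"
  shows "(\<lambda>i. x i + y i) \<in> cspan E"
proof -
  obtain S c where S: "finite S" "S \<subseteq> E" "x = (\<lambda>i. \<Sum>v\<in>S. c v * v i)" using assms(1) unfolding cspan_def by blast
  obtain S' c' where S': "finite S'" "S' \<subseteq> E" "y = (\<lambda>i. \<Sum>v\<in>S'. c' v * v i)" using assms(2) unfolding cspan_def by blast
  define C where "C v = (if v \<in> S then c v else 0) + (if v \<in> S' then c' v else 0)" for v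
  have "(\<lambda>i. x i + y i) = (\<lambda>i. \<Sum>v\<in>S \<union> S'. C v * v i)"
  proof
    fix i
    have a: "(\<Sum>v\<in>S. c v * v i) = (\<Sum>v\<in>S \<union> S'. (if v \<in> S then c v else 0) * v i)"
      by (rule sum.mono_neutral_cong_left) (use S S' in auto)
    have b: "(\<Sum>v\<in>S'. c' v * v i) = (\<Sum>v\<in>S \<union> S'. (if v \<in> S' then c' v else 0) * v i)"
      by (rule sum.mono_neutral_cong_left) (use S S' in auto)
    show "x i + y i = (\<Sum>v\<in>S \<union> S'. C v * v i)"
      unfolding S(3) S'(3) a b C_def by (simp add: distrib_right sum.distrib)
  qed
  then show ?thesis unfolding cspan_def
    by (intro CollectI exI[of _ "S \<union> S'"] exI[of _ C]) (use S S' in simp)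
qed
lemma cspan_sum:
  assumes "finite J" "\<And>j. j \<in> J \<Longrightarrow> f j \<in> cspan E"
  shows "(\<lambda>i. \<Sum>j\<in>J. f j i) \<in> cspan E"
  using assms
proof (induction J rule: finite_induct)
  case empty then show ?case by (simp add: cspan_zero)
next
  case (insert x F)
  then show ?case using cspan_add[of "f x" E "\<lambda>i. \<Sum>j\<in>F. f j i"] by simp
qed

lemma mv_sum: "mv A (\<lambda>i. \<Sum>k\<in>S. c k * v k i) = (\<lambda>i. \<Sum>k\<in>S. c k * mv A (v k) i)"
  unfolding mv_def
  by (rule ext) (simp add: sum_distrib_left mult_ac sum.swap[of _ S UNIV])

context mu_setting
begin

definition Tp :: "nat \<Rightarrow> 'i hvec \<Rightarrow> 'i hvec" where "Tp k = (mv T ^^ k)"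

lemma Tp_0 [simp]: "Tp 0 x = x" unfolding Tp_def by simp
lemma Tp_Suc: "Tp (Suc k) x = mv T (Tp k x)" unfolding Tp_def by simp
lemma Tp_Suc': "Tp (Suc k) x = Tp k (mv T x)" unfolding Tp_def by (simp add: funpow_Suc_right del: funpow.simps)
lemma Tp_sum: "Tp k (\<lambda>i. \<Sum>j\<in>S. c j * v j i) = (\<lambda>i. \<Sum>j\<in>S. c j * Tp k (v j) i)"
  by (induction k) (simp_all add: Tp_Suc mv_sum)
lemma Tp_add: "Tp k (\<lambda>i. x i + y i) = (\<lambda>i. Tp k x i + Tp k y i)"
  by (induction k) (simp_all add: Tp_Suc mv_add)
lemma Tp_diff: "Tp k (\<lambda>i. x i - y i) = (\<lambda>i. Tp k x i - Tp k y i)"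
  by (induction k) (simp_all add: Tp_Suc mv_diff)
lemma Tp_scale: "Tp k (\<lambda>i. a * x i) = (\<lambda>i. a * Tp k x i)"
  by (induction k) (simp_all add: Tp_Suc mv_scale)
lemma Tp_contr: "vn2 (Tp k x) \<le> vn2 x"
  by (induction k) (auto simp: Tp_Suc intro: order_trans[OF contr])
lemma Tp_add_exp: "Tp (k + m) x = Tp k (Tp m x)"
  unfolding Tp_def by (simp add: funpow_add)

lemma eig_Tp: "mv T x = (\<lambda>i. z * x i) \<Longrightarrow> Tp k x = (\<lambda>i. z ^ k * x i)"
proof (induction k)
  case (Suc k)
  then show ?case by (simp only: Tp_Suc mv_scale) (simp add: mult_ac)
qed simp

lemma fourier_comp:
  assumes d: "d = Suc n" and fx: "Tp d \<eta> = \<eta>" and u: "cmod u = 1" "u ^ d = 1"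
  shows "mv T (\<lambda>i. \<Sum>k<d. cnj u ^ k * Tp k \<eta> i) = (\<lambda>i. u * (\<Sum>k<d. cnj u ^ k * Tp k \<eta> i))"
proof (rule ext)
  fix i
  have uc: "u * cnj u = 1" using u(1) by (simp add: complex_norm_square[symmetric])
  have cn: "cnj u ^ n = u"
  proof -
    have "cnj u ^ n * cnj u = cnj (u ^ d)" using d by (simp add: mult.commute)
    then have "cnj u ^ n * cnj u = 1" using u(2) by simp
    note h = this
    have "cnj u ^ n = cnj u ^ n * (cnj u * u)" using uc by (simp add: mult.commute)
    also have "\<dots> = (cnj u ^ n * cnj u) * u" by (simp only: mult.assoc)
    also have "\<dots> = u" using h by simp
    finally show ?thesis .
  qed
  have "mv T (\<lambda>i. \<Sum>k<d. cnj u ^ k * Tp k \<eta> i) i = (\<Sum>k<d. cnj u ^ k * Tp (Suc k) \<eta> i)"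
    by (simp add: mv_sum Tp_Suc)
  also have "\<dots> = (\<Sum>k<n. cnj u ^ k * Tp (Suc k) \<eta> i) + cnj u ^ n * \<eta> i"
    using fx d by simp
  also have "\<dots> = u * \<eta> i + (\<Sum>k<n. u * (cnj u ^ Suc k * Tp (Suc k) \<eta> i))"
  proof -
    have e: "u * (cnj u ^ Suc k * Tp (Suc k) \<eta> i) = cnj u ^ k * Tp (Suc k) \<eta> i" for k
    proof -
      have "u * (cnj u ^ Suc k * Tp (Suc k) \<eta> i) = (u * cnj u) * (cnj u ^ k * Tp (Suc k) \<eta> i)"
        by (simp only: power_Suc mult_ac)
      then show ?thesis using uc by simp
    qed
    show ?thesis by (simp only: e cn add.commute)
  qed
  also have "\<dots> = u * (\<Sum>k<d. cnj u ^ k * Tp k \<eta> i)"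
    unfolding d sum.lessThan_Suc_shift by (simp add: distrib_left sum_distrib_left)
  finally show "mv T (\<lambda>i. \<Sum>k<d. cnj u ^ k * Tp k \<eta> i) i = u * (\<Sum>k<d. cnj u ^ k * Tp k \<eta> i)" .
qed

lemma fix_in_span:
  assumes d: "d > 0" and fx: "Tp d \<eta> = \<eta>"
  shows "\<eta> \<in> cspan (unimodular_eigenvectors T)"
proof -
  define \<omega> where "\<omega> = cis (2 * pi / real d)"
  note R = root_unity[OF d, folded \<omega>_def]
  obtain n where dn: "d = Suc n" using d by (cases d) auto
  define P where "P j = (\<lambda>i. \<Sum>k<d. cnj (\<omega> ^ j) ^ k * Tp k \<eta> i)" for j
  have Pj: "P j \<in> cspan (unimodular_eigenvectors T)" for j
  proof (cases "P j = (\<lambda>_. 0)")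
    case True then show ?thesis by (simp add: cspan_zero)
  next
    case False
    have u1: "cmod (\<omega> ^ j) = 1" using R(2) by (simp add: norm_power)
    have u2: "(\<omega> ^ j) ^ d = 1" using R(1) by (simp add: power_mult[symmetric] mult.commute power_mult)
    have "mv T (P j) = (\<lambda>i. \<omega> ^ j * P j i)"
      unfolding P_def by (rule fourier_comp[OF dn fx u1 u2])
    then have "P j \<in> unimodular_eigenvectors T"
      unfolding unimodular_eigenvectors_def using False u1 by blast
    then show ?thesis by (rule cspan_base)
  qed
  have sumP: "(\<Sum>j<d. P j i) = of_nat d * \<eta> i" for i
  proof -
    have pc: "cnj (\<omega> ^ j) ^ k = cnj (\<omega> ^ k) ^ j" for j k :: nat
    proof -
      have "(\<omega> ^ j) ^ k = (\<omega> ^ k) ^ j" by (simp add: power_mult[symmetric] mult.commute)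
      then show ?thesis by (simp flip: complex_cnj_power)
    qed
    have "(\<Sum>j<d. P j i) = (\<Sum>j<d. \<Sum>k<d. cnj (\<omega> ^ j) ^ k * Tp k \<eta> i)"
      unfolding P_def by simp
    also have "\<dots> = (\<Sum>k<d. \<Sum>j<d. cnj (\<omega> ^ j) ^ k * Tp k \<eta> i)"
      by (rule sum.swap)
    also have "\<dots> = (\<Sum>k<d. (\<Sum>j<d. (cnj (\<omega> ^ k)) ^ j) * Tp k \<eta> i)"
      by (simp only: pc sum_distrib_right)
    also have "\<dots> = (\<Sum>k\<in>{0}. (\<Sum>j<d. (cnj (\<omega> ^ k)) ^ j) * Tp k \<eta> i)"
    proof (rule sum.mono_neutral_right)
      show "\<forall>k\<in>{..<d} - {0}. (\<Sum>j<d. cnj (\<omega> ^ k) ^ j) * Tp k \<eta> i = 0"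
      proof
        fix k assume k: "k \<in> {..<d} - {0}"
        then have ne: "\<omega> ^ k \<noteq> 1" using R(3)[of k] by auto
        have ne': "cnj (\<omega> ^ k) \<noteq> 1" using ne by (metis complex_cnj_one complex_cnj_cnj)
        have pd: "cnj (\<omega> ^ k) ^ d = 1"
          using R(1) by (simp add: power_mult[symmetric] mult.commute power_mult flip: complex_cnj_power)
        show "(\<Sum>j<d. cnj (\<omega> ^ k) ^ j) * Tp k \<eta> i = 0"
          using ne' pd by (simp add: sum_gp_strict)
      qed
    qed (use d in auto)
    also have "\<dots> = of_nat d * \<eta> i" by simp
    finally show ?thesis .
  qed
  have "(\<lambda>i. \<Sum>j<d. (1 / of_nat d) * P j i) \<in> cspan (unimodular_eigenvectors T)"
    by (rule cspan_sum, simp, rule cspan_scale, rule Pj)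
  moreover have "(\<lambda>i. \<Sum>j<d. (1 / of_nat d) * P j i) = \<eta>"
  proof
    fix i
    have "(\<Sum>j<d. (1 / of_nat d) * P j i) = (1 / of_nat d) * (\<Sum>j<d. P j i)"
      by (simp only: sum_distrib_left)
    also have "\<dots> = \<eta> i" using d by (simp add: sumP)
    finally show "(\<Sum>j<d. (1 / of_nat d) * P j i) = \<eta> i" .
  qed
  ultimately show ?thesis by simp
qed

end

lemma XX_blk: "XX W v b = (\<lambda>i j. \<Sum>w\<in>UNIV. v w * blk W b w i j)"
  unfolding XX_def blk_def by (simp add: mult.commute)

lemma psi_mm_XX:
  assumes lf: "linear_functional \<psi>"
  shows "\<psi> (mm Z (XX W v b)) = (\<Sum>w\<in>UNIV. v w * \<psi> (mm Z (blk W b w)))"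
proof -
  have "mm Z (XX W v b) = (\<lambda>i j. \<Sum>w\<in>UNIV. v w * mm Z (blk W b w) i j)"
  proof (intro ext)
    fix i j
    have "mm Z (XX W v b) i j = (\<Sum>k\<in>UNIV. \<Sum>w\<in>UNIV. v w * (Z i k * blk W b w k j))"
      unfolding XX_blk mm_def by (simp add: sum_distrib_left mult_ac)
    also have "\<dots> = (\<Sum>w\<in>UNIV. \<Sum>k\<in>UNIV. v w * (Z i k * blk W b w k j))" by (rule sum.swap)
    also have "\<dots> = (\<Sum>w\<in>UNIV. v w * mm Z (blk W b w) i j)"
      unfolding mm_def by (simp add: sum_distrib_left)
    finally show "mm Z (XX W v b) i j = (\<Sum>w\<in>UNIV. v w * mm Z (blk W b w) i j)" .
  qed
  then show ?thesis by (simp add: lf_sum[OF lf] lf_scale[OF lf])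
qed

context mu_setting
begin

lemma chain:
  assumes F: "\<And>\<eta>. \<eta> \<in> Fs \<Longrightarrow> vn2 (mv T (Tp j \<eta>)) = vn2 (Tp j \<eta>)"
      and hx: "\<forall>\<eta>\<in>Fs. mv W (tens x \<eta>) = tens x (Tp j \<eta>)"
  shows "\<forall>\<eta>\<in>Fs. mv W (tens (mv T x) \<eta>) = tens (mv T x) (Tp (Suc j) \<eta>)"
proof
  fix \<eta> assume \<eta>: "\<eta> \<in> Fs"
  have iso: "vn2 (mv T (Tp j \<eta>)) = vn2 (Tp j \<eta>)" using F[OF \<eta>] .
  show "mv W (tens (mv T x) \<eta>) = tens (mv T x) (Tp (Suc j) \<eta>)"
  proof (rule ext, clarify)
    fix a b
    have inner: "\<psi> (\<lambda>u u'. \<Sum>a'\<in>UNIV. W (a,b) (a',b') * W (u,a') (u',c)) =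
       (\<Sum>y\<in>UNIV. \<Sum>w\<in>UNIV. W (y,w) (c,b') * \<psi> (mm (blk W a y) (blk W b w)))" for b' c
    proof -
      have "(\<lambda>u u'. \<Sum>a'\<in>UNIV. W (a,b) (a',b') * W (u,a') (u',c)) =
            (\<lambda>u u'. \<Sum>y\<in>UNIV. \<Sum>w\<in>UNIV. W (y,w) (c,b') * mm (blk W a y) (blk W b w) u u')"
      proof (intro ext)
        fix u u'
        have "(\<Sum>a'\<in>UNIV. W (a,b) (a',b') * W (u,a') (u',c)) =
          (\<Sum>x\<in>UNIV. \<Sum>y\<in>UNIV. \<Sum>w\<in>UNIV. W (y,w) (c,b') * (W (u,a) (x,y) * W (x,b) (u',w)))"
          using pent_P[OF mu, of u a b u' c b'] by (simp add: mult_ac)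
        also have "\<dots> = (\<Sum>y\<in>UNIV. \<Sum>w\<in>UNIV. \<Sum>x\<in>UNIV. W (y,w) (c,b') * (W (u,a) (x,y) * W (x,b) (u',w)))"
          by (rule swap12)
        also have "\<dots> = (\<Sum>y\<in>UNIV. \<Sum>w\<in>UNIV. W (y,w) (c,b') * mm (blk W a y) (blk W b w) u u')"
          unfolding mm_def blk_def by (simp add: sum_distrib_left)
        finally show "(\<Sum>a'\<in>UNIV. W (a,b) (a',b') * W (u,a') (u',c)) =
          (\<Sum>y\<in>UNIV. \<Sum>w\<in>UNIV. W (y,w) (c,b') * mm (blk W a y) (blk W b w) u u')" .
      qed
      then show ?thesis by (simp add: lf_sum2[OF lf] lf_scale[OF lf])
    qed
    have "mv W (tens (mv T x) \<eta>) (a,b) = (\<Sum>a'\<in>UNIV. \<Sum>b'\<in>UNIV. W (a,b) (a',b') * ((\<Sum>c\<in>UNIV. \<psi> (blk W a' c) * x c) * \<eta> b'))"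
      unfolding mv_def tens_def Lslice_def blk_def by (simp add: sum_pair)
    also have "\<dots> = (\<Sum>a'\<in>UNIV. \<Sum>b'\<in>UNIV. \<Sum>c\<in>UNIV. (x c * \<eta> b') * (W (a,b) (a',b') * \<psi> (blk W a' c)))"
      by (simp add: sum_distrib_left sum_distrib_right mult_ac)
    also have "\<dots> = (\<Sum>b'\<in>UNIV. \<Sum>c\<in>UNIV. \<Sum>a'\<in>UNIV. (x c * \<eta> b') * (W (a,b) (a',b') * \<psi> (blk W a' c)))"
      by (rule swap12)
    also have "\<dots> = (\<Sum>b'\<in>UNIV. \<Sum>c\<in>UNIV. (x c * \<eta> b') * \<psi> (\<lambda>u u'. \<Sum>a'\<in>UNIV. W (a,b) (a',b') * W (u,a') (u',c)))"
    proof -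
      have "(\<Sum>a'\<in>UNIV. W (a,b) (a',b') * \<psi> (blk W a' c)) = \<psi> (\<lambda>u u'. \<Sum>a'\<in>UNIV. W (a,b) (a',b') * W (u,a') (u',c))" for b' c
        by (simp add: lf_sum[OF lf] lf_scale[OF lf] blk_def)
      then show ?thesis by (simp add: sum_distrib_left[symmetric])
    qed
    also have "\<dots> = (\<Sum>b'\<in>UNIV. \<Sum>c\<in>UNIV. \<Sum>y\<in>UNIV. \<Sum>w\<in>UNIV. \<psi> (mm (blk W a y) (blk W b w)) * (W (y,w) (c,b') * (x c * \<eta> b')))"
      by (simp only: inner) (simp add: sum_distrib_left mult_ac)
    also have "\<dots> = (\<Sum>y\<in>UNIV. \<Sum>w\<in>UNIV. \<Sum>b'\<in>UNIV. \<Sum>c\<in>UNIV. \<psi> (mm (blk W a y) (blk W b w)) * (W (y,w) (c,b') * (x c * \<eta> b')))"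
      by (rule swap22)
    also have "\<dots> = (\<Sum>y\<in>UNIV. \<Sum>w\<in>UNIV. \<psi> (mm (blk W a y) (blk W b w)) * mv W (tens x \<eta>) (y,w))"
    proof -
      have "mv W (tens x \<eta>) (y,w) = (\<Sum>b'\<in>UNIV. \<Sum>c\<in>UNIV. W (y,w) (c,b') * (x c * \<eta> b'))" for y w
      proof -
        have "mv W (tens x \<eta>) (y,w) = (\<Sum>c\<in>UNIV. \<Sum>b'\<in>UNIV. W (y,w) (c,b') * (x c * \<eta> b'))"
          unfolding mv_def tens_def by (simp add: sum_pair)
        also have "\<dots> = (\<Sum>b'\<in>UNIV. \<Sum>c\<in>UNIV. W (y,w) (c,b') * (x c * \<eta> b'))" by (rule sum.swap)
        finally show ?thesis .
      qed
      then show ?thesis by (simp add: sum_distrib_left)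
    qed
    also have "\<dots> = (\<Sum>y\<in>UNIV. \<Sum>w\<in>UNIV. \<psi> (mm (blk W a y) (blk W b w)) * (x y * Tp j \<eta> w))"
      using hx \<eta> by (simp add: tens_def)
    also have "\<dots> = (\<Sum>y\<in>UNIV. x y * \<psi> (mm (blk W a y) (XX W (Tp j \<eta>) b)))"
      by (simp add: psi_mm_XX[OF lf] sum_distrib_left mult_ac)
    also have "\<dots> = (\<Sum>y\<in>UNIV. x y * (mv T (Tp j \<eta>) b * \<psi> (blk W a y)))"
      by (simp add: key(1)[OF unit st iso])
    also have "\<dots> = mv T x a * Tp (Suc j) \<eta> b"
    proof -
      have m: "mv T x a = (\<Sum>y\<in>UNIV. \<psi> (blk W a y) * x y)" by (simp add: mv_def Lslice_def blk_def)
      show ?thesis unfolding Tp_Suc m by (simp add: sum_distrib_left sum_distrib_right mult_ac)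
    qed
    also have "\<dots> = tens (mv T x) (Tp (Suc j) \<eta>) (a,b)" by (simp add: tens_def)
    finally show "mv W (tens (mv T x) \<eta>) (a,b) = tens (mv T x) (Tp (Suc j) \<eta>) (a,b)" .
  qed
qed

end

lemma swap13: "(\<Sum>x\<in>(UNIV::'a::finite set). \<Sum>a\<in>(UNIV::'b::finite set). \<Sum>b\<in>(UNIV::'c::finite set). \<Sum>c\<in>(UNIV::'d::finite set). f x a b c) =
  (\<Sum>a\<in>UNIV. \<Sum>b\<in>UNIV. \<Sum>c\<in>UNIV. \<Sum>x\<in>UNIV. f x a b c)"
proof -
  have "(\<Sum>x\<in>(UNIV::'a set). \<Sum>a\<in>(UNIV::'b set). \<Sum>b\<in>(UNIV::'c set). \<Sum>c\<in>(UNIV::'d set). f x a b c) =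
    (\<Sum>x\<in>UNIV. \<Sum>p\<in>UNIV. \<Sum>c\<in>UNIV. f x (fst p) (snd p) c)" by (simp add: sum_pair)
  also have "\<dots> = (\<Sum>p\<in>UNIV. \<Sum>c\<in>UNIV. \<Sum>x\<in>UNIV. f x (fst p) (snd p) c)" by (rule swap12)
  also have "\<dots> = (\<Sum>a\<in>UNIV. \<Sum>b\<in>UNIV. \<Sum>c\<in>UNIV. \<Sum>x\<in>UNIV. f x a b c)" by (simp add: sum_pair)
  finally show ?thesis .
qed

lemma mm_adjXX: "mm (adj (XX W v y)) (XX W v' z) = (\<lambda>u u'. \<Sum>c\<in>UNIV. \<Sum>a\<in>UNIV. (cnj (v c) * v' a) * mm (adj (blk W y c)) (blk W z a) u u')"
proof (intro ext)
  fix u u'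
  have "mm (adj (XX W v y)) (XX W v' z) u u' = (\<Sum>x\<in>UNIV. \<Sum>c\<in>UNIV. \<Sum>a\<in>UNIV. cnj (W (x,y) (u,c)) * cnj (v c) * (W (x,z) (u',a) * v' a))"
    unfolding mm_def XX_def adj_def by (simp add: sum_product)
  also have "\<dots> = (\<Sum>c\<in>UNIV. \<Sum>a\<in>UNIV. \<Sum>x\<in>UNIV. cnj (W (x,y) (u,c)) * cnj (v c) * (W (x,z) (u',a) * v' a))"
    by (rule swap12)
  also have "\<dots> = (\<Sum>c\<in>UNIV. \<Sum>a\<in>UNIV. (cnj (v c) * v' a) * mm (adj (blk W y c)) (blk W z a) u u')"
    unfolding mm_def blk_def adj_def by (simp add: sum_distrib_left mult_ac)
  finally show "mm (adj (XX W v y)) (XX W v' z) u u' = (\<Sum>c\<in>UNIV. \<Sum>a\<in>UNIV. (cnj (v c) * v' a) * mm (adj (blk W y c)) (blk W z a) u u')" .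
qed

definition Lv :: "('i::finite \<times> 'i) hop \<Rightarrow> 'i hvec \<Rightarrow> 'i hvec \<Rightarrow> 'i hvec" where
  "Lv W g \<eta> = (\<lambda>b. \<Sum>y\<in>UNIV. cnj (g y) * mv W (tens g \<eta>) (y,b))"

lemma Lv_fixed:
  assumes "mv W (tens g \<eta>) = tens g \<eta>"
  shows "Lv W g \<eta> = (\<lambda>b. of_real (vn2 g) * \<eta> b)"
proof -
  have "Lv W g \<eta> = (\<lambda>b. \<Sum>y\<in>UNIV. cnj (g y) * tens g \<eta> (y,b))"
    unfolding Lv_def assms ..
  also have "\<dots> = (\<lambda>b. of_real (vn2 g) * \<eta> b)"
  proof
    fix b
    have "(\<Sum>y\<in>UNIV. cnj (g y) * tens g \<eta> (y,b)) = \<eta> b * (\<Sum>y\<in>UNIV. g y * cnj (g y))"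
      unfolding tens_def by (simp add: sum_distrib_left mult_ac)
    then show "(\<Sum>y\<in>UNIV. cnj (g y) * tens g \<eta> (y,b)) = of_real (vn2 g) * \<eta> b"
      using cinner_self[of g] unfolding cinner_def by (simp add: mult.commute)
  qed
  finally show ?thesis .
qed

context mu_setting
begin

lemma prodf:
  assumes iso: "vn2 (mv T g) = vn2 g"
  shows "mv T (Lv W g \<eta>) = Lv W (mv T g) \<eta>"
proof (rule ext)
  fix b
  have inner: "(\<Sum>b'\<in>UNIV. W (y,b') (y',c) * \<psi> (blk W b b')) =
     (\<Sum>p\<in>UNIV. \<Sum>p'\<in>UNIV. W (p,b) (p',c) * \<psi> (mm (adj (blk W p y)) (blk W p' y')))" for y y' c
  proof -
    have "(\<lambda>u u'. \<Sum>b'\<in>UNIV. W (y,b') (y',c) * W (u,b) (u',b')) =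
          (\<lambda>u u'. \<Sum>p\<in>UNIV. \<Sum>p'\<in>UNIV. W (p,b) (p',c) * mm (adj (blk W p y)) (blk W p' y') u u')"
    proof (intro ext)
      fix u u'
      have "(\<Sum>b'\<in>UNIV. W (y,b') (y',c) * W (u,b) (u',b')) =
        (\<Sum>x\<in>UNIV. \<Sum>p\<in>UNIV. \<Sum>p'\<in>UNIV. W (p,b) (p',c) * (cnj (W (x,p) (u,y)) * W (x,p') (u',y')))"
        using pent_Q[OF mu, of u b u' y y' c] by (simp add: mult_ac)
      also have "\<dots> = (\<Sum>p\<in>UNIV. \<Sum>p'\<in>UNIV. \<Sum>x\<in>UNIV. W (p,b) (p',c) * (cnj (W (x,p) (u,y)) * W (x,p') (u',y')))"
        by (rule swap12)
      also have "\<dots> = (\<Sum>p\<in>UNIV. \<Sum>p'\<in>UNIV. W (p,b) (p',c) * mm (adj (blk W p y)) (blk W p' y') u u')"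
        unfolding mm_def blk_def adj_def by (simp add: sum_distrib_left)
      finally show "(\<Sum>b'\<in>UNIV. W (y,b') (y',c) * W (u,b) (u',b')) =
        (\<Sum>p\<in>UNIV. \<Sum>p'\<in>UNIV. W (p,b) (p',c) * mm (adj (blk W p y)) (blk W p' y') u u')" .
    qed
    moreover have "(\<Sum>b'\<in>UNIV. W (y,b') (y',c) * \<psi> (blk W b b')) = \<psi> (\<lambda>u u'. \<Sum>b'\<in>UNIV. W (y,b') (y',c) * W (u,b) (u',b'))"
      by (simp add: lf_sum[OF lf] lf_scale[OF lf] blk_def)
    ultimately show ?thesis by (simp add: lf_sum2[OF lf] lf_scale[OF lf])
  qed
  have "mv T (Lv W g \<eta>) b = (\<Sum>b'\<in>UNIV. \<psi> (blk W b b') * (\<Sum>y\<in>UNIV. cnj (g y) * (\<Sum>y'\<in>UNIV. \<Sum>c\<in>UNIV. W (y,b') (y',c) * (g y' * \<eta> c))))"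
    unfolding mv_def Lslice_def Lv_def tens_def blk_def by (simp add: sum_pair)
  also have "\<dots> = (\<Sum>b'\<in>UNIV. \<Sum>y\<in>UNIV. \<Sum>y'\<in>UNIV. \<Sum>c\<in>UNIV. (cnj (g y) * g y' * \<eta> c) * (W (y,b') (y',c) * \<psi> (blk W b b')))"
    by (simp add: sum_distrib_left mult_ac)
  also have "\<dots> = (\<Sum>y\<in>UNIV. \<Sum>y'\<in>UNIV. \<Sum>c\<in>UNIV. \<Sum>b'\<in>UNIV. (cnj (g y) * g y' * \<eta> c) * (W (y,b') (y',c) * \<psi> (blk W b b')))"
    by (rule swap13)
  also have "\<dots> = (\<Sum>y\<in>UNIV. \<Sum>y'\<in>UNIV. \<Sum>c\<in>UNIV. (cnj (g y) * g y' * \<eta> c) *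
       (\<Sum>p\<in>UNIV. \<Sum>p'\<in>UNIV. W (p,b) (p',c) * \<psi> (mm (adj (blk W p y)) (blk W p' y'))))"
    by (simp only: sum_distrib_left[symmetric] inner)
  also have "\<dots> = (\<Sum>y\<in>UNIV. \<Sum>y'\<in>UNIV. \<Sum>c\<in>UNIV. \<Sum>p\<in>UNIV. \<Sum>p'\<in>UNIV.
       (\<eta> c * W (p,b) (p',c)) * ((cnj (g y) * g y') * \<psi> (mm (adj (blk W p y)) (blk W p' y'))))"
    by (simp add: sum_distrib_left mult_ac)
  also have "\<dots> = (\<Sum>y\<in>UNIV. \<Sum>y'\<in>UNIV. \<Sum>p\<in>UNIV. \<Sum>p'\<in>UNIV. \<Sum>c\<in>UNIV.
       (\<eta> c * W (p,b) (p',c)) * ((cnj (g y) * g y') * \<psi> (mm (adj (blk W p y)) (blk W p' y'))))"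
    by (intro sum.cong refl swap12)
  also have "\<dots> = (\<Sum>p\<in>UNIV. \<Sum>p'\<in>UNIV. \<Sum>y\<in>UNIV. \<Sum>y'\<in>UNIV. \<Sum>c\<in>UNIV.
       (\<eta> c * W (p,b) (p',c)) * ((cnj (g y) * g y') * \<psi> (mm (adj (blk W p y)) (blk W p' y'))))"
    by (rule swap22)
  also have "\<dots> = (\<Sum>p\<in>UNIV. \<Sum>p'\<in>UNIV. \<Sum>c\<in>UNIV. \<Sum>y\<in>UNIV. \<Sum>y'\<in>UNIV.
       (\<eta> c * W (p,b) (p',c)) * ((cnj (g y) * g y') * \<psi> (mm (adj (blk W p y)) (blk W p' y'))))"
    by (intro sum.cong refl swap12[symmetric])
  also have "\<dots> = (\<Sum>p\<in>UNIV. \<Sum>p'\<in>UNIV. \<Sum>c\<in>UNIV. (\<eta> c * W (p,b) (p',c)) * \<psi> (mm (adj (XX W g p)) (XX W g p')))"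
    by (simp add: mm_adjXX lf_sum2[OF lf] lf_scale[OF lf] sum_distrib_left)
  also have "\<dots> = (\<Sum>p\<in>UNIV. \<Sum>p'\<in>UNIV. \<Sum>c\<in>UNIV. (\<eta> c * W (p,b) (p',c)) * (cnj (mv T g p) * mv T g p'))"
    by (simp add: key(2)[OF unit st iso] T_XX)
  also have "\<dots> = Lv W (mv T g) \<eta> b"
    unfolding Lv_def mv_def[of W] tens_def by (simp add: sum_pair sum_distrib_left mult_ac)
  finally show "mv T (Lv W g \<eta>) b = Lv W (mv T g) \<eta> b" .
qed

end

context mu_setting
begin

lemma F_iso:
  assumes d: "d > 0" and fx: "Tp d \<eta> = \<eta>"
  shows "vn2 (mv T \<eta>) = vn2 \<eta>"
proof -
  obtain m where m: "d = Suc m" using d by (cases d) auto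
  have "vn2 \<eta> = vn2 (Tp m (mv T \<eta>))" using fx m by (simp add: Tp_Suc')
  also have "\<dots> \<le> vn2 (mv T \<eta>)" by (rule Tp_contr)
  finally have "vn2 \<eta> \<le> vn2 (mv T \<eta>)" .
  then show ?thesis using contr[of \<eta>] by simp
qed

lemma F_T:
  assumes fx: "Tp d \<eta> = \<eta>"
  shows "Tp d (mv T \<eta>) = mv T \<eta>"
  using fx by (metis Tp_Suc Tp_Suc')

lemma F_Tp:
  assumes fx: "Tp d \<eta> = \<eta>"
  shows "Tp d (Tp k \<eta>) = Tp k \<eta>"
  by (induction k) (simp_all add: fx Tp_Suc F_T)

lemma span_eq_F:
  assumes d: "d > 0" and dG: "\<forall>z\<in>unimodular_eigenvalues T. z ^ d = 1"
  shows "cspan (unimodular_eigenvectors T) = {\<eta>. Tp d \<eta> = \<eta>}"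
proof
  show "{\<eta>. Tp d \<eta> = \<eta>} \<subseteq> cspan (unimodular_eigenvectors T)"
    using fix_in_span[OF d] by blast
  show "cspan (unimodular_eigenvectors T) \<subseteq> {\<eta>. Tp d \<eta> = \<eta>}"
  proof
    fix v assume "v \<in> cspan (unimodular_eigenvectors T)"
    then obtain S c where S: "finite S" "S \<subseteq> unimodular_eigenvectors T" "v = (\<lambda>i. \<Sum>x\<in>S. c x * x i)"
      unfolding cspan_def by blast
    have ex: "Tp d x = x" if "x \<in> S" for x
    proof -
      from that S(2) obtain z where z: "x \<noteq> (\<lambda>_. 0)" "cmod z = 1" "mv T x = (\<lambda>i. z * x i)"
        unfolding unimodular_eigenvectors_def by blast
      then have "z \<in> unimodular_eigenvalues T" unfolding unimodular_eigenvalues_def by blast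
      then have "z ^ d = 1" using dG by blast
      then show ?thesis using eig_Tp[OF z(3), of d] by simp
    qed
    have "Tp d v = v" unfolding S(3) Tp_sum using ex by simp
    then show "v \<in> {\<eta>. Tp d \<eta> = \<eta>}" by simp
  qed
qed

lemma Hsup_F:
  assumes d: "d > 0" and f0: "Tp d f0 = f0" and nz: "f0 \<noteq> (\<lambda>_. 0)" and \<eta>: "\<eta> \<in> Hsup W f0"
  shows "Tp d \<eta> = \<eta>"
proof -
  have fixd: "mv W (tens f0 \<eta>) = tens f0 \<eta>" using \<eta> unfolding Hsup_def by simp
  have it: "Tp k (Lv W f0 \<eta>) = Lv W (Tp k f0) \<eta>" for k
  proof (induction k)
    case (Suc k)
    have iso: "vn2 (mv T (Tp k f0)) = vn2 (Tp k f0)"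
      by (rule F_iso[OF d F_Tp[OF f0]])
    show ?case by (simp add: Tp_Suc Suc prodf[OF iso])
  qed simp
  have "Tp d (Lv W f0 \<eta>) = Lv W f0 \<eta>" using it[of d] f0 by simp
  then have "(\<lambda>i. of_real (vn2 f0) * Tp d \<eta> i) = (\<lambda>i. of_real (vn2 f0) * \<eta> i)"
    unfolding Lv_fixed[OF fixd] Tp_scale .
  moreover have "vn2 f0 \<noteq> 0" using nz by (simp add: vn2_zero_iff)
  ultimately show ?thesis by (auto intro!: ext dest: fun_cong)
qed

end

lemma vn2_diff: "vn2 (\<lambda>i. a i - b i) = vn2 a - 2 * Re (cinner a b) + vn2 b"
proof -
  have "of_real (vn2 (\<lambda>i. a i - b i)) = cinner a a - cinner a b - cinner b a + cinner b b"
    unfolding cinner_self[symmetric] by (simp add: cinner_diff_left cinner_diff_right)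
  also have "\<dots> = of_real (vn2 a) + of_real (vn2 b) - (cinner a b + cnj (cinner a b))"
    by (simp add: cinner_self cinner_cnj[of b a])
  also have "\<dots> = of_real (vn2 a - 2 * Re (cinner a b) + vn2 b)"
    by (simp add: complex_add_cnj)
  finally show ?thesis by (simp only: of_real_eq_iff)
qed

lemma comp_le: "(cmod (x p))\<^sup>2 \<le> vn2 x"
  unfolding vn2_def by (rule member_le_sum) auto

lemma comp_le': "cmod (x p) \<le> sqrt (vn2 x)"
  using comp_le[of x p] by (simp add: real_le_rsqrt)

lemma vn2_tens: "vn2 (tens v \<eta>) = vn2 v * vn2 \<eta>"
  using cinner_tens[of v \<eta> v \<eta>] by (simp add: cinner_self flip: of_real_mult)

lemma tens_sum: "tens (\<lambda>i. \<Sum>n\<in>S. v n i) \<eta> = (\<lambda>p. \<Sum>n\<in>S. 1 * tens (v n) \<eta> p)"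
  unfolding tens_def by (auto intro!: ext simp: sum_distrib_right)

lemma tens_lin: "tens (\<lambda>i. a * x i + b * y i) \<eta> = (\<lambda>p. a * tens x \<eta> p + b * tens y \<eta> p)"
  unfolding tens_def by (auto intro!: ext simp: algebra_simps)

context mu_setting
begin

lemma Tp_inner_F:
  assumes d: "d > 0" and w: "Tp d w = w"
  shows "cinner (Tp k y) (Tp k w) = cinner y w"
proof (induction k)
  case (Suc k)
  have iso: "vn2 (mv T (Tp k w)) = vn2 (Tp k w)" by (rule F_iso[OF d F_Tp[OF w]])
  show ?case by (simp add: Tp_Suc iso_inner[OF iso] Suc)
qed simp

lemma decomp:
  assumes d: "d > 0"
  obtains y0 r where "e0 = (\<lambda>i. (y0 i - Tp d y0 i) + r i)" "\<And>y. cinner (\<lambda>i. y i - Tp d y i) r = 0" "Tp d r = r"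
proof -
  define M where "M = {(\<lambda>i. y i - Tp d y i) | y. True}"
  have Mlin: "(\<lambda>i. a * x i + b * x' i) \<in> M" if xm: "x \<in> M" and xm': "x' \<in> M" for a b x x'
  proof -
    obtain y where y: "x = (\<lambda>i. y i - Tp d y i)" using xm unfolding M_def by blast
    obtain y' where y': "x' = (\<lambda>i. y' i - Tp d y' i)" using xm' unfolding M_def by blast
    have "Tp d (\<lambda>i. a * y i + b * y' i) = (\<lambda>i. a * Tp d y i + b * Tp d y' i)"
      by (simp add: Tp_add Tp_scale)
    then have "(\<lambda>i. a * x i + b * x' i) = (\<lambda>i. (a * y i + b * y' i) - Tp d (\<lambda>i. a * y i + b * y' i) i)"
      unfolding y y' by (auto intro!: ext simp: algebra_simps)
    then show ?thesis unfolding M_def by (intro CollectI exI[of _ "\<lambda>i. a * y i + b * y' i"]) simp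
  qed
  have M0: "(\<lambda>_. 0) \<in> M" unfolding M_def by (rule CollectI, rule exI[of _ "\<lambda>_. 0"]) (simp add: Tp_scale[of d 0 "\<lambda>_. 0", simplified])
  have sub: "subspace (tov ` M)"
    unfolding subspace_def
  proof (intro conjI ballI allI)
    show "0 \<in> tov ` M" using M0 unfolding tov_def by (force simp: vec_eq_iff zero_vec_def)
    fix x y assume "x \<in> tov ` M" "y \<in> tov ` M"
    then obtain a b where ab: "a \<in> M" "b \<in> M" "x = tov a" "y = tov b" by blast
    have "x + y = tov (\<lambda>i. 1 * a i + 1 * b i)" unfolding ab tov_def by (simp add: vec_eq_iff)
    then show "x + y \<in> tov ` M" using Mlin[OF ab(1,2)] by blast
  next
    fix c :: real and x assume "x \<in> tov ` M"
    then obtain a where a: "a \<in> M" "x = tov a" by blast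
    have "c *\<^sub>R x = tov (\<lambda>i. of_real c * a i + 0 * a i)" unfolding a tov_def vec_eq_iff vector_scaleR_component by (simp add: scaleR_conv_of_real)
    then show "c *\<^sub>R x \<in> tov ` M" using Mlin[OF a(1) a(1)] by blast
  qed
  obtain yv z where yz: "yv \<in> span (tov ` M)" "\<And>w. w \<in> span (tov ` M) \<Longrightarrow> orthogonal z w" "tov e0 = yv + z"
    using orthogonal_subspace_decomp_exists[of "tov ` M" "tov e0"] by blast
  have spanM: "span (tov ` M) = tov ` M" using sub by (simp add: span_eq_iff)
  obtain m where m: "m \<in> M" "yv = tov m" using yz(1) spanM by auto
  obtain y0 where y0: "m = (\<lambda>i. y0 i - Tp d y0 i)" using m(1) unfolding M_def by blast
  define r where "r = (\<lambda>i. z $ i)"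
  have zr: "z = tov r" unfolding r_def tov_def by simp
  have e0: "e0 = (\<lambda>i. (y0 i - Tp d y0 i) + r i)"
  proof
    fix i
    have "tov e0 $ i = yv $ i + z $ i" using yz(3) by simp
    then show "e0 i = (y0 i - Tp d y0 i) + r i" unfolding m(2) zr y0 tov_def by simp
  qed
  have orth: "cinner (\<lambda>i. y i - Tp d y i) r = 0" for y
  proof -
    let ?v = "\<lambda>i. y i - Tp d y i"
    have vM: "?v \<in> M" unfolding M_def by blast
    have ivM: "(\<lambda>i. \<i> * ?v i + 0 * ?v i) \<in> M" by (rule Mlin[OF vM vM])
    have "inner z (tov ?v) = 0" using yz(2)[of "tov ?v"] vM spanM unfolding orthogonal_def by auto
    then have re: "Re (cinner ?v r) = 0" unfolding zr inner_tov using inner_commute by (metis inner_tov)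
    have "inner z (tov (\<lambda>i. \<i> * ?v i + 0 * ?v i)) = 0" using yz(2) ivM spanM unfolding orthogonal_def by auto
    moreover have "(\<lambda>i. \<i> * ?v i + 0 * ?v i) = (\<lambda>i. \<i> * ?v i)" by simp
    ultimately have "inner z (tov (\<lambda>i. \<i> * ?v i)) = 0" by simp
    then have "inner (tov (\<lambda>i. \<i> * ?v i)) (tov r) = 0" unfolding zr by (simp add: inner_commute)
    then have "Re (cinner (\<lambda>i. \<i> * ?v i) r) = 0" by (simp only: inner_tov)
    then have im: "Im (cinner ?v r) = 0" by (simp add: cinner_scale_left)
    show ?thesis using re im by (simp add: complex_eq_iff)
  qed
  have fixr: "Tp d r = r"
  proof -
    have c0: "cinner (\<lambda>i. r i - Tp d r i) r = 0" by (rule orth)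
    then have "cinner r r = cinner (Tp d r) r" by (simp add: cinner_diff_left)
    then have "Re (cinner (Tp d r) r) = vn2 r" by (metis Re_complex_of_real cinner_self)
    then have "vn2 (\<lambda>i. Tp d r i - r i) = vn2 (Tp d r) - vn2 r"
      by (simp add: vn2_diff)
    also have "\<dots> \<le> 0" using Tp_contr[of d r] by simp
    finally have "vn2 (\<lambda>i. Tp d r i - r i) = 0" using vn2_nonneg by (metis antisym)
    then show ?thesis unfolding vn2_zero_iff by (auto intro!: ext dest: fun_cong)
  qed
  show ?thesis by (rule that[OF e0 orth fixr])
qed

end

context mu_setting
begin

lemma Tp_mult_fix:
  assumes "Tp d \<eta> = \<eta>"
  shows "Tp (d * n) \<eta> = \<eta>"
proof (induction n)
  case (Suc n)
  have "Tp (d * Suc n) \<eta> = Tp d (Tp (d * n) \<eta>)" by (simp add: Tp_add_exp[symmetric])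
  then show ?case using Suc assms by simp
qed simp

lemma averaging:
  assumes d: "d > 0" and e0fix: "\<forall>\<eta>. mv W (tens e0 \<eta>) = tens e0 \<eta>"
      and e0: "e0 = (\<lambda>i. (y0 i - Tp d y0 i) + r i)" and fr: "Tp d r = r"
      and \<eta>: "Tp d \<eta> = \<eta>"
  shows "mv W (tens r \<eta>) = tens r \<eta>"
proof -
  let ?Fs = "{\<eta>. Tp d \<eta> = \<eta>}"
  have P: "\<forall>\<eta>'\<in>?Fs. mv W (tens (Tp k e0) \<eta>') = tens (Tp k e0) (Tp k \<eta>')" for k
  proof (induction k)
    case 0 then show ?case using e0fix by simp
  next
    case (Suc k)
    have F: "vn2 (mv T (Tp k \<eta>')) = vn2 (Tp k \<eta>')" if "\<eta>' \<in> ?Fs" for \<eta>'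
      using F_iso[OF d F_Tp[of d \<eta>' k]] that by simp
    show ?case using chain[OF F Suc] by (simp add: Tp_Suc)
  qed
  define G where "G x p = mv W (tens x \<eta>) p - tens x \<eta> p" for x p
  have Glin: "G (\<lambda>i. a * x i + b * y i) p = a * G x p + b * G y p" for a b x y p
    unfolding G_def tens_lin by (simp add: mv_add mv_scale algebra_simps)
  have Gz: "G (Tp (d * n) e0) p = 0" for n p
    using P[of "d * n"] \<eta> Tp_mult_fix[OF \<eta>, of n] unfolding G_def by simp
  define s where "s N = (\<lambda>i. \<Sum>n<N. Tp (d * n) e0 i)" for N
  have Gs: "G (s N) p = 0" for N p
  proof (induction N)
    case 0
    have "G (\<lambda>i. 0 * e0 i + 0 * e0 i) p = 0" unfolding Glin by simp
    then show ?case unfolding s_def by simp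
  next
    case (Suc N)
    have "s (Suc N) = (\<lambda>i. 1 * s N i + 1 * Tp (d * N) e0 i)" unfolding s_def by auto
    then show ?case using Suc Gz by (simp only: Glin) simp
  qed
  have tel: "s N = (\<lambda>i. 1 * y0 i + (- 1) * Tp (d * N) y0 i + of_nat N * r i)" for N
  proof (induction N)
    case 0 then show ?case unfolding s_def by auto
  next
    case (Suc N)
    have "Tp (d * N) e0 = (\<lambda>i. (Tp (d * N) y0 i - Tp (d * Suc N) y0 i) + r i)"
    proof -
      have "Tp (d * N) (Tp d y0) = Tp (d * Suc N) y0" by (simp add: Tp_add_exp[symmetric] add.commute)
      moreover have "Tp (d * N) r = r" by (rule Tp_mult_fix[OF fr])
      ultimately show ?thesis unfolding e0 by (simp add: Tp_add Tp_diff)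
    qed
    note tp = this
    show ?case
    proof
      fix i
      have "s (Suc N) i = s N i + Tp (d * N) e0 i" unfolding s_def by simp
      also have "\<dots> = (1 * y0 i + (- 1) * Tp (d * N) y0 i + of_nat N * r i) + ((Tp (d * N) y0 i - Tp (d * Suc N) y0 i) + r i)"
        using Suc tp by simp
      also have "\<dots> = 1 * y0 i + (- 1) * Tp (d * Suc N) y0 i + of_nat (Suc N) * r i"
        by (simp add: algebra_simps)
      finally show "s (Suc N) i = 1 * y0 i + (- 1) * Tp (d * Suc N) y0 i + of_nat (Suc N) * r i" .
    qed
  qed
  have bound: "cmod (G v p) \<le> 2 * sqrt (vn2 v * vn2 \<eta>)" for v p
  proof -
    have "cmod (mv W (tens v \<eta>) p) \<le> sqrt (vn2 v * vn2 \<eta>)"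
      using comp_le'[of "mv W (tens v \<eta>)" p] by (simp add: unitary_vn2[OF unit] vn2_tens)
    moreover have "cmod (tens v \<eta> p) \<le> sqrt (vn2 v * vn2 \<eta>)"
      using comp_le'[of "tens v \<eta>" p] by (simp add: vn2_tens)
    ultimately show ?thesis unfolding G_def by (smt (verit) norm_triangle_ineq4)
  qed
  have "G r p = 0" for p
  proof (rule ccontr)
    assume nz: "G r p \<noteq> 0"
    define K where "K = 2 * sqrt (vn2 y0 * vn2 \<eta>) + cmod (G y0 p)"
    obtain N :: nat where N: "K < of_nat N * cmod (G r p)" using ex_less_of_nat_mult[of "cmod (G r p)" K] nz by auto
    have "0 = G (s N) p" using Gs by simp
    also have "\<dots> = G y0 p - G (Tp (d * N) y0) p + of_nat N * G r p"
    proof -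
      have "G (s N) p = G (\<lambda>i. 1 * (\<lambda>i. 1 * y0 i + (- 1) * Tp (d * N) y0 i) i + of_nat N * r i) p"
        unfolding tel by simp
      also have "\<dots> = G y0 p - G (Tp (d * N) y0) p + of_nat N * G r p" by (simp only: Glin) simp
      finally show ?thesis .
    qed
    finally have eq: "of_nat N * G r p = G (Tp (d * N) y0) p - G y0 p" by (simp add: algebra_simps)
    have "of_nat N * cmod (G r p) = cmod (G (Tp (d * N) y0) p - G y0 p)"
      using arg_cong[OF eq, of cmod] by (simp add: norm_mult)
    also have "\<dots> \<le> cmod (G (Tp (d * N) y0) p) + cmod (G y0 p)" by (rule norm_triangle_ineq4)
    also have "cmod (G (Tp (d * N) y0) p) \<le> 2 * sqrt (vn2 y0 * vn2 \<eta>)"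
    proof -
      have "vn2 (Tp (d * N) y0) * vn2 \<eta> \<le> vn2 y0 * vn2 \<eta>"
        using Tp_contr[of "d * N" y0] vn2_nonneg[of \<eta>] by (simp add: mult_right_mono)
      then have sq: "sqrt (vn2 (Tp (d * N) y0) * vn2 \<eta>) \<le> sqrt (vn2 y0 * vn2 \<eta>)" by (rule real_sqrt_le_mono)
      show ?thesis using bound[of "Tp (d * N) y0" p] sq by linarith
    qed
    finally have "of_nat N * cmod (G r p) \<le> K" unfolding K_def by simp
    then show False using N by simp
  qed
  then show ?thesis unfolding G_def by (auto intro!: ext)
qed

theorem main_abstract:
  assumes e0fix: "\<forall>\<eta>. mv W (tens e0 \<eta>) = tens e0 \<eta>"
      and h0fix: "\<forall>\<xi>. mv W (tens \<xi> h0) = tens \<xi> h0"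
      and eh: "cinner e0 h0 \<noteq> 0"
  shows "finite_subgroup_U1 (unimodular_eigenvalues T)
    \<and> (\<forall>z\<in>unimodular_eigenvalues T. \<exists>n::nat. n > 0 \<and> z ^ n = 1)
    \<and> (\<exists>f0. f0 \<noteq> (\<lambda>_. 0) \<and> mv W (tens f0 f0) = tens f0 f0
          \<and> cspan (unimodular_eigenvectors T) = Hsup W f0
          \<and> cinner f0 e0 = of_real (vn2 f0) \<and> cinner f0 h0 = cinner e0 h0)"
proof -
  have h0: "h0 \<noteq> (\<lambda>_. 0)" using eh by auto
  note grp = eigvals_group[OF h0fix h0]
  obtain d where d: "d > 0" "\<forall>z\<in>unimodular_eigenvalues T. z ^ d = 1"
    using common_exponent[OF eigvals_finite grp(2)] by blast
  obtain y0 r where dec: "e0 = (\<lambda>i. (y0 i - Tp d y0 i) + r i)" "\<And>y. cinner (\<lambda>i. y i - Tp d y i) r = 0" "Tp d r = r"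
    using decomp[OF d(1)] by blast
  have Th0: "Tp d h0 = h0" using eig_Tp[of h0 1 d] cofixed_T[OF h0fix] by simp
  have m_h0: "cinner (\<lambda>i. y0 i - Tp d y0 i) h0 = 0"
    using Tp_inner_F[OF d(1) Th0, of d y0] Th0 by (simp add: cinner_diff_left)
  have rh: "cinner r h0 = cinner e0 h0"
    using m_h0 by (subst dec(1)) (simp add: cinner_add_left)
  have rnz: "r \<noteq> (\<lambda>_. 0)" using rh eh by auto
  have re: "cinner r e0 = of_real (vn2 r)"
  proof -
    have "cinner r e0 = cinner r (\<lambda>i. y0 i - Tp d y0 i) + cinner r r"
      by (subst dec(1)) (simp add: cinner_add_right)
    also have "cinner r (\<lambda>i. y0 i - Tp d y0 i) = 0"
      using dec(2)[of y0] by (subst cinner_cnj) simp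
    finally show ?thesis by (simp add: cinner_self)
  qed
  have avg: "mv W (tens r \<eta>) = tens r \<eta>" if "Tp d \<eta> = \<eta>" for \<eta>
    by (rule averaging[OF d(1) e0fix dec(1) dec(3) that])
  have H: "Hsup W r = {\<eta>. Tp d \<eta> = \<eta>}"
  proof
    show "Hsup W r \<subseteq> {\<eta>. Tp d \<eta> = \<eta>}" using Hsup_F[OF d(1) dec(3) rnz] by blast
    show "{\<eta>. Tp d \<eta> = \<eta>} \<subseteq> Hsup W r" using avg unfolding Hsup_def by blast
  qed
  have rr: "mv W (tens r r) = tens r r" by (rule avg[OF dec(3)])
  show ?thesis
    using grp rnz rr H span_eq_F[OF d] re rh by blast
qed

end

definition hatV :: "('i::finite \<times> 'i) hop \<Rightarrow> ('i \<times> 'i) hop" where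
  "hatV V = (\<lambda>(a,b) (a',b'). cnj (V (b',a') (b,a)))"

lemma hatV_ev: "hatV V (a,b) (a',b') = cnj (V (b',a') (b,a))"
  by (simp add: hatV_def)

lemma rev3: "(\<Sum>a\<in>(UNIV::'a::finite set). \<Sum>b\<in>(UNIV::'b::finite set). \<Sum>c\<in>(UNIV::'c::finite set). f a b c) =
  (\<Sum>c\<in>UNIV. \<Sum>b\<in>UNIV. \<Sum>a\<in>UNIV. f a b c)"
proof -
  have "(\<Sum>a\<in>(UNIV::'a set). \<Sum>b\<in>(UNIV::'b set). \<Sum>c\<in>(UNIV::'c set). f a b c) =
        (\<Sum>a\<in>(UNIV::'a set). \<Sum>c\<in>(UNIV::'c set). \<Sum>b\<in>(UNIV::'b set). f a b c)"
    by (intro sum.cong refl sum.swap)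
  also have "\<dots> = (\<Sum>c\<in>UNIV. \<Sum>b\<in>UNIV. \<Sum>a\<in>UNIV. f a b c)" by (rule swap12)
  finally show ?thesis .
qed

lemma mm_entry2: "mm A B (a,b) (a',b') = (\<Sum>x\<in>UNIV. \<Sum>y\<in>UNIV. A (a,b) (x,y) * B (x,y) (a',b'))"
  unfolding mm_def by (simp add: sum_pair)

lemma fun2_eq: "(\<And>a b a' b'. F (a,b) (a',b') = G (a,b) (a',b')) \<Longrightarrow> F = G"
  by (intro ext) auto

lemma hatV_unitary:
  assumes u: "unitary_op V"
  shows "unitary_op (hatV V)"
proof -
  have u1: "mm V (adj V) = idop" and u2: "mm (adj V) V = idop" using u unfolding unitary_op_def by auto
  have "mm (hatV V) (adj (hatV V)) (a,b) (a',b') = idop (a,b) (a',b')" for a b a' b'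
  proof -
    have "mm (hatV V) (adj (hatV V)) (a,b) (a',b') = (\<Sum>x\<in>UNIV. \<Sum>y\<in>UNIV. cnj (V (y,x) (b,a)) * V (y,x) (b',a'))"
      by (simp add: mm_entry2 adj_def hatV_ev)
    also have "\<dots> = (\<Sum>y\<in>UNIV. \<Sum>x\<in>UNIV. cnj (V (y,x) (b,a)) * V (y,x) (b',a'))" by (rule sum.swap)
    also have "\<dots> = mm (adj V) V (b,a) (b',a')" by (simp add: mm_entry2 adj_def)
    also have "\<dots> = idop (a,b) (a',b')" using u2 by (auto simp: idop_def)
    finally show ?thesis .
  qed
  moreover have "mm (adj (hatV V)) (hatV V) (a,b) (a',b') = idop (a,b) (a',b')" for a b a' b'
  proof -
    have "mm (adj (hatV V)) (hatV V) (a,b) (a',b') = (\<Sum>x\<in>UNIV. \<Sum>y\<in>UNIV. V (b,a) (y,x) * cnj (V (b',a') (y,x)))"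
      by (simp add: mm_entry2 adj_def hatV_ev)
    also have "\<dots> = (\<Sum>y\<in>UNIV. \<Sum>x\<in>UNIV. V (b,a) (y,x) * cnj (V (b',a') (y,x)))" by (rule sum.swap)
    also have "\<dots> = mm V (adj V) (b,a) (b',a')" by (simp add: mm_entry2 adj_def)
    also have "\<dots> = idop (a,b) (a',b')" using u1 by (auto simp: idop_def)
    finally show ?thesis .
  qed
  ultimately show ?thesis unfolding unitary_op_def by (auto intro!: fun2_eq)
qed

lemma pent_from_coord:
  assumes c: "\<And>u B C u' B' C'. (\<Sum>x\<in>UNIV. \<Sum>y\<in>UNIV. \<Sum>w\<in>UNIV. W (u,B) (x,y) * W (x,C) (u',w) * W (y,w) (B',C')) =
         (\<Sum>y\<in>UNIV. W (B,C) (y,C') * W (u,y) (u',B'))"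
  shows "mm (mm (leg12 W) (leg13 W)) (leg23 W) = mm (leg23 W) (leg12 W)"
proof (rule fun3_eq)
  fix u B C u' B' C'
  have l: "mm (mm (leg12 W) (leg13 W)) (leg23 W) (u,B,C) (u',B',C') =
     (\<Sum>x\<in>UNIV. \<Sum>y\<in>UNIV. \<Sum>w\<in>UNIV. W (u,B) (x,y) * W (x,C) (u',w) * W (y,w) (B',C'))"
    unfolding mm_assoc by (simp add: mm_leg12_l mm_leg13_l mm_leg23_l leg23_ev dls2 sum_distrib_left mult_ac)
  have r: "mm (leg23 W) (leg12 W) (u,B,C) (u',B',C') = (\<Sum>y\<in>UNIV. W (B,C) (y,C') * W (u,y) (u',B'))"
    by (simp add: mm_leg23_l leg12_ev dls2 mult_ac)
  show "mm (mm (leg12 W) (leg13 W)) (leg23 W) (u,B,C) (u',B',C') = mm (leg23 W) (leg12 W) (u,B,C) (u',B',C')"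
    unfolding l r by (rule c)
qed

lemma hatV_mu:
  assumes mu: "multiplicative_unitary V"
  shows "multiplicative_unitary (hatV V)"
proof -
  have u: "unitary_op V" using mu unfolding multiplicative_unitary_def by blast
  have c: "(\<Sum>x\<in>UNIV. \<Sum>y\<in>UNIV. \<Sum>w\<in>UNIV. hatV V (u,B) (x,y) * hatV V (x,C) (u',w) * hatV V (y,w) (B',C')) =
         (\<Sum>y\<in>UNIV. hatV V (B,C) (y,C') * hatV V (u,y) (u',B'))" for u B C u' B' C'
  proof -
    have "(\<Sum>x\<in>UNIV. \<Sum>y\<in>UNIV. \<Sum>w\<in>UNIV. hatV V (u,B) (x,y) * hatV V (x,C) (u',w) * hatV V (y,w) (B',C')) =
       cnj (\<Sum>x\<in>UNIV. \<Sum>y\<in>UNIV. \<Sum>w\<in>UNIV. V (C',B') (w,y) * V (w,u') (C,x) * V (y,x) (B,u))"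
      by (simp add: hatV_ev mult_ac)
    also have "(\<Sum>x\<in>UNIV. \<Sum>y\<in>UNIV. \<Sum>w\<in>UNIV. V (C',B') (w,y) * V (w,u') (C,x) * V (y,x) (B,u)) =
       (\<Sum>w\<in>UNIV. \<Sum>y\<in>UNIV. \<Sum>x\<in>UNIV. V (C',B') (w,y) * V (w,u') (C,x) * V (y,x) (B,u))"
      by (rule rev3)
    also have "\<dots> = (\<Sum>y\<in>UNIV. V (B',u') (y,u) * V (C',y) (C,B))"
      by (rule pent_P[OF mu])
    also have "cnj \<dots> = (\<Sum>y\<in>UNIV. hatV V (B,C) (y,C') * hatV V (u,y) (u',B'))"
      by (simp add: hatV_ev mult_ac)
    finally show ?thesis .
  qed
  show ?thesis unfolding multiplicative_unitary_def
    using hatV_unitary[OF u] pent_from_coord[OF c] by blast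
qed

lemma hatV_tens: "mv (hatV V) (tens \<xi> \<eta>) (a,b) = mv (adj V) (tens \<eta> \<xi>) (b,a)"
  unfolding mv_def tens_def adj_def hatV_def
  by (simp add: sum_pair mult_ac) (rule sum.swap)

lemma hatV_tens_iff:
  assumes u: "unitary_op V"
  shows "mv (hatV V) (tens \<xi> \<eta>) = tens \<xi> \<eta> \<longleftrightarrow> mv V (tens \<eta> \<xi>) = tens \<eta> \<xi>"
proof -
  have "mv (hatV V) (tens \<xi> \<eta>) = tens \<xi> \<eta> \<longleftrightarrow> mv (adj V) (tens \<eta> \<xi>) = tens \<eta> \<xi>"
  proof
    assume h: "mv (hatV V) (tens \<xi> \<eta>) = tens \<xi> \<eta>"
    show "mv (adj V) (tens \<eta> \<xi>) = tens \<eta> \<xi>"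
    proof (rule ext, clarify)
      fix b a
      have "mv (adj V) (tens \<eta> \<xi>) (b,a) = mv (hatV V) (tens \<xi> \<eta>) (a,b)" by (simp add: hatV_tens)
      also have "\<dots> = tens \<eta> \<xi> (b,a)" using h by (simp add: tens_def mult.commute)
      finally show "mv (adj V) (tens \<eta> \<xi>) (b,a) = tens \<eta> \<xi> (b,a)" .
    qed
  next
    assume h: "mv (adj V) (tens \<eta> \<xi>) = tens \<eta> \<xi>"
    show "mv (hatV V) (tens \<xi> \<eta>) = tens \<xi> \<eta>"
    proof (rule ext, clarify)
      fix a b
      have "mv (hatV V) (tens \<xi> \<eta>) (a,b) = mv (adj V) (tens \<eta> \<xi>) (b,a)" by (simp add: hatV_tens)
      also have "\<dots> = tens \<xi> \<eta> (a,b)" using h by (simp add: tens_def mult.commute)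
      finally show "mv (hatV V) (tens \<xi> \<eta>) (a,b) = tens \<xi> \<eta> (a,b)" .
    qed
  qed
  also have "\<dots> \<longleftrightarrow> mv V (tens \<eta> \<xi>) = tens \<eta> \<xi>"
    using unitary_inv[OF u] by metis
  finally show ?thesis .
qed

lemma hatV_Lslice:
  assumes st: "is_state \<psi>"
  shows "Lslice (hatV V) \<psi> = adj (Rslice V \<psi>)"
proof (intro ext)
  fix b b'
  have "(\<lambda>a a'. hatV V (a,b) (a',b')) = adj (\<lambda>a a'. V (b',a) (b,a'))"
    by (auto intro!: ext simp: hatV_ev adj_def)
  then have "Lslice (hatV V) \<psi> b b' = \<psi> (adj (\<lambda>a a'. V (b',a) (b,a')))"
    unfolding Lslice_def by simp
  also have "\<dots> = cnj (\<psi> (\<lambda>a a'. V (b',a) (b,a')))" by (rule state_herm[OF st])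
  also have "\<dots> = adj (Rslice V \<psi>) b b'" unfolding adj_def Rslice_def by simp
  finally show "Lslice (hatV V) \<psi> b b' = adj (Rslice V \<psi>) b b'" .
qed

lemma Hsup_hatV:
  assumes u: "unitary_op V"
  shows "Hsup (hatV V) f = Hsub V f"
  unfolding Hsup_def Hsub_def using hatV_tens_iff[OF u] by blast


definition trs :: "'i::finite hop \<Rightarrow> complex" where
  "trs A = (\<Sum>a\<in>UNIV. A a a) / of_nat CARD('i)"

lemma trs_adj: "trs (mm (adj A) (A :: 'i::finite hop)) = of_real (\<Sum>a\<in>UNIV. \<Sum>x\<in>UNIV. (cmod (A x a))\<^sup>2) / of_nat CARD('i)"
proof -
  have "mm (adj A) A a a = of_real (\<Sum>x\<in>UNIV. (cmod (A x a))\<^sup>2)" for a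
  proof -
    have "mm (adj A) A a a = (\<Sum>x\<in>UNIV. A x a * cnj (A x a))"
      by (simp add: mm_def adj_def mult.commute)
    also have "\<dots> = (\<Sum>x\<in>UNIV. of_real ((cmod (A x a))\<^sup>2))"
      by (simp only: complex_norm_square)
    finally show ?thesis by simp
  qed
  then show ?thesis unfolding trs_def by simp
qed

lemma trs_state: "is_state (trs :: 'i::finite hop \<Rightarrow> complex)"
  unfolding is_state_def linear_functional_def
proof (intro conjI allI)
  show "trs (\<lambda>i j. A i j + B i j) = trs A + trs B" for A B :: "'i hop"
    unfolding trs_def by (simp add: sum.distrib add_divide_distrib)
  show "trs (\<lambda>i j. c * A i j) = c * trs A" for c and A :: "'i hop"
    unfolding trs_def by (simp add: sum_distrib_left)
  show "trs (idop :: 'i hop) = 1" unfolding trs_def idop_def by simp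
  fix A :: "'i hop"
  show "Im (trs (mm (adj A) A)) = 0" unfolding trs_adj by (simp add: Im_divide)
  show "Re (trs (mm (adj A) A)) \<ge> 0" unfolding trs_adj
    by (simp add: Re_divide sum_nonneg divide_nonneg_nonneg)
qed

lemma trs_faithful:
  assumes "trs (mm (adj Y) (Y :: 'a::finite hop)) = (0::complex)"
  shows "Y = (\<lambda>i j. 0)"
proof -
  have "of_real (\<Sum>a\<in>UNIV. \<Sum>x\<in>UNIV. (cmod (Y x a))\<^sup>2) / of_nat CARD('a) = (0::complex)"
    using assms unfolding trs_adj .
  then have "(\<Sum>a\<in>UNIV. \<Sum>x\<in>UNIV. (cmod (Y x a))\<^sup>2) = 0 \<or> CARD('a) = 0"
    by (simp only: divide_eq_0_iff of_real_eq_0_iff of_nat_eq_0_iff)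
  then have "(\<Sum>a\<in>UNIV. \<Sum>x\<in>UNIV. (cmod (Y x a))\<^sup>2) = 0" by simp
  then have "\<forall>a\<in>UNIV. (\<Sum>x\<in>UNIV. (cmod (Y x a))\<^sup>2) = 0"
    by (subst sum_nonneg_eq_0_iff[symmetric]) (auto intro: sum_nonneg)
  note h = this
  have "(cmod (Y x a))\<^sup>2 = 0" for a x
  proof -
    have "(\<Sum>x\<in>UNIV. (cmod (Y x a))\<^sup>2) = 0" using h by simp
    then have "\<forall>x\<in>UNIV. (cmod (Y x a))\<^sup>2 = 0"
      by (subst sum_nonneg_eq_0_iff[symmetric]) auto
    then show ?thesis by simp
  qed
  then show ?thesis by (auto intro!: ext)
qed

definition om :: "'i::finite hvec \<Rightarrow> 'i hop \<Rightarrow> complex" where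
  "om g A = (\<Sum>a\<in>UNIV. \<Sum>a'\<in>UNIV. cnj (g a) * A a a' * g a')"

lemma om_adj: "om g (mm (adj A) A) = of_real (vn2 (mv A g))"
proof -
  have "om g (mm (adj A) A) = (\<Sum>a\<in>UNIV. \<Sum>a'\<in>UNIV. \<Sum>x\<in>UNIV. cnj (A x a * g a) * (A x a' * g a'))"
    unfolding om_def mm_def adj_def by (simp add: sum_distrib_left sum_distrib_right mult_ac)
  also have "\<dots> = (\<Sum>x\<in>UNIV. \<Sum>a\<in>UNIV. \<Sum>a'\<in>UNIV. cnj (A x a * g a) * (A x a' * g a'))"
    by (rule swap12[symmetric])
  also have "\<dots> = (\<Sum>x\<in>UNIV. mv A g x * cnj (mv A g x))"
    unfolding mv_def by (simp add: sum_distrib_left sum_distrib_right mult_ac)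
  also have "\<dots> = of_real (vn2 (mv A g))"
    using cinner_self[of "mv A g"] unfolding cinner_def by simp
  finally show ?thesis .
qed

lemma om_state:
  assumes "vn2 g = 1"
  shows "is_state (om g)"
  unfolding is_state_def linear_functional_def
proof (intro conjI allI)
  show "om g (\<lambda>i j. A i j + B i j) = om g A + om g B" for A B
    unfolding om_def by (simp add: distrib_left distrib_right sum.distrib)
  show "om g (\<lambda>i j. c * A i j) = c * om g A" for c A
    unfolding om_def by (simp add: sum_distrib_left mult_ac)
  show "om g idop = 1"
    using assms cinner_self[of g] unfolding om_def idop_def cinner_def
    by (simp add: if_distrib[of "\<lambda>x. _ * x"] if_distrib[of "\<lambda>x. x * _"] mult.commute cong: if_cong)
  fix A
  show "Im (om g (mm (adj A) A)) = 0" by (simp add: om_adj)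
  show "Re (om g (mm (adj A) A)) \<ge> 0" by (simp add: om_adj vn2_nonneg)
qed

lemma Lslice_om: "mv (Lslice W (om g)) \<eta> = Lv W g \<eta>"
proof (rule ext)
  fix b
  have "mv (Lslice W (om g)) \<eta> b = (\<Sum>b'\<in>UNIV. \<Sum>a\<in>UNIV. \<Sum>a'\<in>UNIV. cnj (g a) * (W (a,b) (a',b') * g a' * \<eta> b'))"
    unfolding mv_def Lslice_def om_def by (simp add: sum_distrib_right sum_distrib_left mult_ac)
  also have "\<dots> = (\<Sum>a\<in>UNIV. \<Sum>a'\<in>UNIV. \<Sum>b'\<in>UNIV. cnj (g a) * (W (a,b) (a',b') * g a' * \<eta> b'))"
    by (rule swap12)
  also have "\<dots> = Lv W g \<eta> b"
    unfolding Lv_def mv_def tens_def by (simp add: sum_pair sum_distrib_left mult_ac)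
  finally show "mv (Lslice W (om g)) \<eta> b = Lv W g \<eta> b" .
qed


lemma swap23: "(\<Sum>a\<in>(UNIV::'a::finite set). \<Sum>b\<in>(UNIV::'b::finite set). \<Sum>x\<in>(UNIV::'c::finite set). \<Sum>y\<in>(UNIV::'d::finite set). \<Sum>z\<in>(UNIV::'e::finite set). f a b x y z) =
  (\<Sum>x\<in>UNIV. \<Sum>y\<in>UNIV. \<Sum>z\<in>UNIV. \<Sum>a\<in>UNIV. \<Sum>b\<in>UNIV. f a b x y z)"
proof -
  have "(\<Sum>a\<in>(UNIV::'a set). \<Sum>b\<in>(UNIV::'b set). \<Sum>x\<in>(UNIV::'c set). \<Sum>y\<in>(UNIV::'d set). \<Sum>z\<in>(UNIV::'e set). f a b x y z) =
    (\<Sum>p\<in>UNIV. \<Sum>t\<in>UNIV. f (fst p) (snd p) (fst t) (fst (snd t)) (snd (snd t)))" by (simp add: sum_pair)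
  also have "\<dots> = (\<Sum>t\<in>UNIV. \<Sum>p\<in>UNIV. f (fst p) (snd p) (fst t) (fst (snd t)) (snd (snd t)))" by (rule sum.swap)
  also have "\<dots> = (\<Sum>x\<in>UNIV. \<Sum>y\<in>UNIV. \<Sum>z\<in>UNIV. \<Sum>a\<in>UNIV. \<Sum>b\<in>UNIV. f a b x y z)" by (simp add: sum_pair)
  finally show ?thesis .
qed

lemma Ltau_idem:
  assumes mu: "multiplicative_unitary (V :: ('i::finite \<times> 'i) hop)"
  shows "mm (Lslice V trs) (Lslice V trs) = Lslice V trs"
proof (intro ext)
  fix c c'
  define n :: complex where "n = of_nat CARD('i)"
  have n0: "n \<noteq> 0" unfolding n_def by simp
  have u: "mm V (adj V) = idop" using mu unfolding multiplicative_unitary_def unitary_op_def by blast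
  have uni: "(\<Sum>a\<in>UNIV. \<Sum>b\<in>UNIV. cnj (V (x,y) (a,b)) * V (x,y') (a,b)) = (if y' = y then 1 else 0)" for x y y'
  proof -
    have "(\<Sum>a\<in>UNIV. \<Sum>b\<in>UNIV. cnj (V (x,y) (a,b)) * V (x,y') (a,b)) = mm V (adj V) (x,y') (x,y)"
      by (simp add: mm_entry2 adj_def mult.commute)
    then show ?thesis using u by (simp add: idop_def)
  qed
  have L: "Lslice V trs p q = (\<Sum>a\<in>UNIV. V (a,p) (a,q)) / n" for p q
    unfolding Lslice_def trs_def n_def by simp
  have "mm (Lslice V trs) (Lslice V trs) c c' = (\<Sum>w\<in>UNIV. \<Sum>b\<in>UNIV. \<Sum>a\<in>UNIV. V (a,c) (a,w) * V (b,w) (b,c')) / (n * n)"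
    unfolding mm_def L by (simp add: sum_distrib_left sum_distrib_right sum_divide_distrib)
  also have "(\<Sum>w\<in>UNIV. \<Sum>b\<in>UNIV. \<Sum>a\<in>UNIV. V (a,c) (a,w) * V (b,w) (b,c')) =
      (\<Sum>w\<in>UNIV. \<Sum>a\<in>UNIV. \<Sum>b\<in>UNIV. V (a,c) (a,w) * V (b,w) (b,c'))"
    by (intro sum.cong refl sum.swap)
  also have "\<dots> = (\<Sum>a\<in>UNIV. \<Sum>b\<in>UNIV. \<Sum>w\<in>UNIV. V (a,c) (a,w) * V (b,w) (b,c'))"
    by (rule swap12)
  also have "\<dots> = (\<Sum>a\<in>UNIV. \<Sum>b\<in>UNIV. \<Sum>x\<in>UNIV. \<Sum>y\<in>UNIV. \<Sum>y'\<in>UNIV. cnj (V (x,y) (a,b)) * V (y,c) (y',c') * V (x,y') (a,b))"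
    by (simp add: pent_Q[OF mu])
  also have "\<dots> = (\<Sum>x\<in>UNIV. \<Sum>y\<in>UNIV. \<Sum>y'\<in>UNIV. \<Sum>a\<in>UNIV. \<Sum>b\<in>UNIV. cnj (V (x,y) (a,b)) * V (y,c) (y',c') * V (x,y') (a,b))"
    by (rule swap23)
  also have "\<dots> = (\<Sum>x\<in>UNIV. \<Sum>y\<in>UNIV. \<Sum>y'\<in>UNIV. V (y,c) (y',c') * (\<Sum>a\<in>UNIV. \<Sum>b\<in>UNIV. cnj (V (x,y) (a,b)) * V (x,y') (a,b)))"
    by (simp add: sum_distrib_left mult_ac)
  also have "\<dots> = (\<Sum>x\<in>(UNIV::'i set). \<Sum>y\<in>UNIV. V (y,c) (y,c'))"
    by (simp add: uni dls2)
  also have "\<dots> = n * (\<Sum>y\<in>UNIV. V (y,c) (y,c'))" unfolding n_def by simp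
  finally show "mm (Lslice V trs) (Lslice V trs) c c' = Lslice V trs c c'"
    unfolding L using n0 by (simp add: field_simps)
qed

lemma vn2_scale': "vn2 (\<lambda>i. z * w i) = (cmod z)\<^sup>2 * vn2 w"
  unfolding vn2_def by (simp add: norm_mult power_mult_distrib sum_distrib_left)

lemma vn2_add: "vn2 (\<lambda>i. a i + b i) = vn2 a + 2 * Re (cinner a b) + vn2 b"
proof -
  have "of_real (vn2 (\<lambda>i. a i + b i)) = cinner a a + cinner a b + cinner b a + cinner b b"
    unfolding cinner_self[symmetric] by (simp add: cinner_add_left cinner_add_right)
  also have "\<dots> = of_real (vn2 a) + of_real (vn2 b) + (cinner a b + cnj (cinner a b))"
    by (simp add: cinner_self cinner_cnj[of b a])
  also have "\<dots> = of_real (vn2 a + 2 * Re (cinner a b) + vn2 b)"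
    by (simp add: complex_add_cnj)
  finally show ?thesis by (simp only: of_real_eq_iff)
qed

lemma idem_contr_inner:
  assumes idem: "mm A A = A" and contr: "\<And>x. vn2 (mv A x) \<le> vn2 x"
  shows "cinner (mv A x) x = of_real (vn2 (mv A x))"
proof -
  define u where "u = mv A x"
  define y where "y = (\<lambda>i. x i - u i)"
  have Au: "mv A u = u" unfolding u_def by (simp add: mv_mm[symmetric] idem)
  have Ay: "mv A y = (\<lambda>_. 0)" unfolding y_def by (simp add: mv_diff Au[unfolded u_def] u_def)
  define c where "c = cinner u y"
  have "c = 0"
  proof (rule ccontr)
    assume cnz: "c \<noteq> 0"
    define s :: real where "s = 1 / (vn2 y + 1)"
    have s0: "s > 0" unfolding s_def using vn2_nonneg[of y] by simp
    have sy: "s * vn2 y < 1" unfolding s_def using vn2_nonneg[of y] by (simp add: field_simps)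
    define t where "t = - (of_real s * c)"
    have "mv A (\<lambda>i. u i + t * y i) = u"
      by (simp add: mv_add mv_scale Au Ay)
    then have "vn2 u \<le> vn2 (\<lambda>i. u i + t * y i)" using contr[of "\<lambda>i. u i + t * y i"] by simp
    also have "\<dots> = vn2 u + 2 * Re (cinner u (\<lambda>i. t * y i)) + vn2 (\<lambda>i. t * y i)" by (rule vn2_add)
    finally have "0 \<le> 2 * Re (cnj t * c) + (cmod t)\<^sup>2 * vn2 y"
      by (simp add: cinner_scale_right vn2_scale' c_def)
    also have "Re (cnj t * c) = - s * (cmod c)\<^sup>2"
      unfolding t_def cmod_power2 by (simp add: algebra_simps power2_eq_square)
    also have "(cmod t)\<^sup>2 = s * s * (cmod c)\<^sup>2"
      unfolding t_def using s0 by (simp add: norm_mult power_mult_distrib power2_eq_square)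
    finally have "0 \<le> (cmod c)\<^sup>2 * s * (s * vn2 y - 2)" by (simp add: algebra_simps)
    moreover have "(cmod c)\<^sup>2 * s > 0" using cnz s0 by simp
    ultimately have "s * vn2 y - 2 \<ge> 0" by (simp add: zero_le_mult_iff)
    then show False using sy by simp
  qed
  have "x = (\<lambda>i. u i + y i)" unfolding y_def by simp
  then have "cinner u x = cinner u u + c" unfolding c_def by (metis cinner_add_right)
  then show ?thesis using \<open>c = 0\<close> by (simp add: u_def cinner_self)
qed


lemma cinner_dlt_right: "cinner x (dlt a) = x a"
proof -
  have "cinner x (dlt a) = (\<Sum>i\<in>UNIV. x i * (if i = a then 1 else 0))"
    unfolding cinner_def dlt_def by (intro sum.cong refl) simp
  then show ?thesis by (simp only: sum_delta_r2)
qed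

lemma vn2_hnorm1: "hnorm e = 1 \<Longrightarrow> vn2 e = 1"
  unfolding hnorm_vn2 using vn2_nonneg[of e] by simp

lemma eq_from_inner:
  assumes "\<And>y. cinner y u = cinner y v"
  shows "u = v"
proof -
  have "cinner (\<lambda>i. u i - v i) (\<lambda>i. u i - v i) = 0"
    using assms[of "\<lambda>i. u i - v i"] by (simp add: cinner_diff_right)
  then have "vn2 (\<lambda>i. u i - v i) = 0" by (simp add: cinner_self)
  then show ?thesis unfolding vn2_zero_iff by (auto intro!: ext dest: fun_cong)
qed

context mu_setting
begin

lemma eig_adj:
  assumes e: "mv T w = (\<lambda>i. c * w i)" and c: "cmod c = 1"
  shows "mv (adj T) w = (\<lambda>i. cnj c * w i)"
proof (rule eq_from_inner[symmetric])
  fix y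
  have iso: "vn2 (mv T w) = vn2 w" by (rule eig_iso[OF e c])
  have cc: "cnj c * c = 1" using c by (simp add: complex_norm_square[symmetric] mult.commute)
  have w: "w = (\<lambda>i. cnj c * mv T w i)" using e cc by (auto simp: mult.assoc[symmetric])
  have "cinner y (mv (adj T) w) = cinner (mv T y) w" by (simp add: cinner_adj)
  also have "\<dots> = c * cinner (mv T y) (mv T w)"
    by (subst w) (simp add: cinner_scale_right)
  also have "\<dots> = c * cinner y w" by (simp add: iso_inner[OF iso])
  also have "\<dots> = cinner y (\<lambda>i. cnj c * w i)" by (simp add: cinner_scale_right)
  finally show "cinner y (\<lambda>i. cnj c * w i) = cinner y (mv (adj T) w)" by simp
qed

end

lemma adj_eig:
  assumes contr: "\<And>x. vn2 (mv C x) \<le> vn2 x"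
      and e: "mv (adj C) w = (\<lambda>i. z * w i)" and z: "cmod z = 1"
  shows "mv C w = (\<lambda>i. cnj z * w i)"
proof -
  have zz: "z * cnj z = 1" using z by (simp add: complex_norm_square[symmetric])
  have "cinner (mv C w) (\<lambda>i. cnj z * w i) = z * cinner w (mv (adj C) w)"
    by (simp add: cinner_scale_right cinner_adj)
  also have "\<dots> = of_real (vn2 w)" unfolding e by (simp add: cinner_scale_right cinner_self mult.assoc[symmetric] zz)
  finally have ci: "cinner (mv C w) (\<lambda>i. cnj z * w i) = of_real (vn2 w)" .
  have "vn2 (\<lambda>i. mv C w i - cnj z * w i) = vn2 (mv C w) - 2 * vn2 w + vn2 w"
    unfolding vn2_diff ci using z by (simp add: vn2_scale')
  also have "\<dots> \<le> 0" using contr[of w] by simp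
  finally have "vn2 (\<lambda>i. mv C w i - cnj z * w i) = 0" using vn2_nonneg by (metis antisym)
  then show ?thesis unfolding vn2_zero_iff by (auto intro!: ext dest: fun_cong)
qed

lemma cofixed_exists:
  assumes mu: "multiplicative_unitary V" and ef: "\<forall>\<eta>. mv V (tens e \<eta>) = tens e \<eta>" and e1: "vn2 e = 1"
  shows "\<exists>h. (\<forall>\<xi>. mv V (tens \<xi> h) = tens \<xi> h) \<and> Im (cinner h e) = 0 \<and> Re (cinner h e) > 0"
proof -
  have u: "unitary_op V" using mu unfolding multiplicative_unitary_def by blast
  interpret Lt: mu_setting V trs by (unfold_locales) (rule mu, rule trs_state)
  let ?L = "Lslice V trs"
  define h where "h = mv ?L e"
  have Lh: "mv ?L h = h" unfolding h_def by (simp add: mv_mm[symmetric] Ltau_idem[OF mu])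
  have cof: "\<forall>\<xi>. mv V (tens \<xi> h) = tens \<xi> h"
  proof
    fix \<xi>
    have "Yres V trs h b = (\<lambda>i j. 0)" for b
      by (rule trs_faithful, rule key0(2)[OF u trs_state], simp add: Lh)
    note Y0 = this
    have X: "XX V h b = (\<lambda>i j. h b * idop i j)" for b
    proof (intro ext)
      fix i j
      have "Yres V trs h b i j = 0" using Y0[of b] by simp
      then show "XX V h b i j = h b * idop i j" unfolding Yres_def Lh by simp
    qed
    show "mv V (tens \<xi> h) = tens \<xi> h"
    proof (rule ext, clarify)
      fix a b
      have "mv V (tens \<xi> h) (a,b) = mv (XX V h b) \<xi> a" by (rule W_tens)
      also have "\<dots> = h b * \<xi> a" unfolding X mv_def idop_def by (simp add: dls2)
      also have "\<dots> = tens \<xi> h (a,b)" by (simp add: tens_def mult.commute)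
      finally show "mv V (tens \<xi> h) (a,b) = tens \<xi> h (a,b)" .
    qed
  qed
  have ef2: "\<forall>\<xi>. mv (hatV V) (tens \<xi> e) = tens \<xi> e" using hatV_tens_iff[OF u] ef by blast
  have st: "is_state (om e)" by (rule om_state[OF e1])
  interpret H: mu_setting "hatV V" "om e" by (unfold_locales) (rule hatV_mu[OF mu], rule st)
  let ?P = "Lslice (hatV V) (om e)"
  have Pe: "mv ?P e = e" by (rule H.cofixed_T[OF ef2])
  have idem: "mm ?P ?P = ?P"
  proof (intro ext)
    fix i j
    have iso: "vn2 (mv ?P e) = vn2 e" using Pe by simp
    have "mm ?P ?P i j = mv ?P (mv ?P (dlt j)) i" by (subst mv_mm[symmetric]) (simp add: mv_dlt)
    also have "\<dots> = mv ?P (dlt j) i"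
    proof -
      have B: "mv ?P (dlt j) = Lv (hatV V) e (dlt j)" by (rule Lslice_om)
      have "mv ?P (mv ?P (dlt j)) = mv ?P (Lv (hatV V) e (dlt j))" by (simp only: B)
      also have "\<dots> = Lv (hatV V) (mv ?P e) (dlt j)" by (rule H.prodf[OF iso])
      also have "\<dots> = mv ?P (dlt j)" by (simp only: Pe B)
      finally show ?thesis by simp
    qed
    also have "\<dots> = ?P i j" by (simp add: mv_dlt)
    finally show "mm ?P ?P i j = ?P i j" .
  qed
  have diag: "?P a a = of_real (vn2 (mv ?P (dlt a)))" for a
  proof -
    have "mv ?P (dlt a) a = of_real (vn2 (mv ?P (dlt a)))"
      using idem_contr_inner[OF idem H.contr, of "dlt a"] by (simp only: cinner_dlt_right)
    moreover have "mv ?P (dlt a) a = ?P a a" by (simp only: mv_dlt)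
    ultimately show ?thesis by simp
  qed
  have "\<exists>a0. mv ?P (dlt a0) \<noteq> (\<lambda>_. 0)"
  proof (rule ccontr)
    assume "\<not> (\<exists>a0. mv ?P (dlt a0) \<noteq> (\<lambda>_. 0))"
    then have "\<forall>a. mv ?P (dlt a) = (\<lambda>_. 0)" by blast
    then have "?P = (\<lambda>i j. 0)" by (auto intro!: ext simp: mv_dlt dest!: fun_cong)
    then have "e = (\<lambda>_. 0)" using Pe by (simp add: mv_def)
    then show False using e1 by (simp add: vn2_def)
  qed
  then obtain a0 where a0: "mv ?P (dlt a0) \<noteq> (\<lambda>_. 0)" by blast
  have pos: "(\<Sum>a\<in>UNIV. vn2 (mv ?P (dlt a))) > 0"
  proof -
    have "vn2 (mv ?P (dlt a0)) > 0" using a0 vn2_nonneg vn2_zero_iff by (metis less_eq_real_def)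
    moreover have "vn2 (mv ?P (dlt a0)) \<le> (\<Sum>a\<in>UNIV. vn2 (mv ?P (dlt a)))"
      by (rule member_le_sum) (auto simp: vn2_nonneg)
    ultimately show ?thesis by simp
  qed
  have PR: "?P = adj (Rslice V (om e))" by (rule hatV_Lslice[OF st])
  have R: "Rslice V (om e) a a = of_real (vn2 (mv ?P (dlt a)))" for a
  proof -
    have "Rslice V (om e) a a = cnj (?P a a)" unfolding PR adj_def by simp
    then show ?thesis using diag[of a] by simp
  qed
  have "cinner h e = (\<Sum>a\<in>UNIV. Rslice V (om e) a a) / of_nat CARD('a)"
  proof -
    have "cinner h e = (\<Sum>b\<in>UNIV. \<Sum>b'\<in>UNIV. \<Sum>a\<in>UNIV. cnj (e b) * V (a,b) (a,b') * e b') / of_nat CARD('a)"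
      unfolding h_def cinner_def mv_def Lslice_def trs_def
      by (simp add: sum_distrib_left sum_distrib_right sum_divide_distrib mult_ac)
    also have "(\<Sum>b\<in>UNIV. \<Sum>b'\<in>UNIV. \<Sum>a\<in>UNIV. cnj (e b) * V (a,b) (a,b') * e b') =
        (\<Sum>a\<in>UNIV. \<Sum>b\<in>UNIV. \<Sum>b'\<in>UNIV. cnj (e b) * V (a,b) (a,b') * e b')"
      by (rule swap12[symmetric])
    also have "\<dots> = (\<Sum>a\<in>UNIV. Rslice V (om e) a a)" unfolding Rslice_def om_def by simp
    finally show ?thesis .
  qed
  also have "\<dots> = of_real ((\<Sum>a\<in>UNIV. vn2 (mv ?P (dlt a))) / real CARD('a))"
    by (simp add: R)
  finally have "cinner h e = of_real ((\<Sum>a\<in>UNIV. vn2 (mv ?P (dlt a))) / real CARD('a))" .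
  moreover have "(\<Sum>a\<in>UNIV. vn2 (mv ?P (dlt a))) / real CARD('a) > 0" using pos by simp
  ultimately show ?thesis using cof by auto
qed


lemma tens_scale_l: "tens (\<lambda>i. c * f i) \<eta> = (\<lambda>p. c * tens f \<eta> p)"
  unfolding tens_def by (auto intro!: ext simp: mult.assoc)
lemma tens_scale_r: "tens \<xi> (\<lambda>i. c * f i) = (\<lambda>p. c * tens \<xi> f p)"
  unfolding tens_def by (auto intro!: ext simp: mult_ac)

lemma fixed_scale_iff:
  assumes c: "c \<noteq> 0"
  shows "mv W (\<lambda>p. c * X p) = (\<lambda>p. c * X p) \<longleftrightarrow> mv W X = X"
proof
  assume "mv W (\<lambda>p. c * X p) = (\<lambda>p. c * X p)"
  then have "(\<lambda>p. c * mv W X p) = (\<lambda>p. c * X p)" by (simp add: mv_scale)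
  then show "mv W X = X" using c by (auto intro!: ext dest: fun_cong)
qed (simp add: mv_scale)

lemma Hsup_scale: "c \<noteq> 0 \<Longrightarrow> Hsup W (\<lambda>i. c * f i) = Hsup W f"
  unfolding Hsup_def tens_scale_l by (simp add: fixed_scale_iff)
lemma Hsub_scale: "c \<noteq> 0 \<Longrightarrow> Hsub W (\<lambda>i. c * f i) = Hsub W f"
  unfolding Hsub_def tens_scale_r by (simp add: fixed_scale_iff)
lemma self_fixed_scale:
  assumes "c \<noteq> 0" "mv W (tens f f) = tens f f"
  shows "mv W (tens (\<lambda>i. c * f i) (\<lambda>i. c * f i)) = tens (\<lambda>i. c * f i) (\<lambda>i. c * f i)"
proof -
  have "tens (\<lambda>i. c * f i) (\<lambda>i. c * f i) = (\<lambda>p. (c * c) * tens f f p)"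
    unfolding tens_scale_l tens_scale_r by (auto simp: mult_ac)
  then show ?thesis using assms fixed_scale_iff[of "c * c" W "tens f f"] by simp
qed

lemma normalize:
  assumes "f0 \<noteq> (\<lambda>_. 0)"
  defines "k \<equiv> sqrt (vn2 f0)"
  shows "k > 0" "hnorm (\<lambda>i. complex_of_real (1 / k) * f0 i) = 1"
proof -
  have v: "vn2 f0 > 0" using assms(1) vn2_nonneg vn2_zero_iff by (metis less_eq_real_def)
  then show k: "k > 0" unfolding k_def by simp
  have "vn2 (\<lambda>i. complex_of_real (1 / k) * f0 i) = (1 / k)\<^sup>2 * vn2 f0"
    by (subst vn2_scale') (simp add: norm_divide abs_of_pos[OF k])
  also have "\<dots> = 1" unfolding k_def using v by (simp add: power_divide)
  finally show "hnorm (\<lambda>i. complex_of_real (1 / k) * f0 i) = 1" by (simp add: hnorm_vn2)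
qed

lemma cnj_group:
  assumes "finite_subgroup_U1 G"
  shows "finite_subgroup_U1 (cnj ` G)"
  using assms unfolding finite_subgroup_U1_def
  by (auto simp flip: complex_cnj_mult complex_cnj_inverse intro!: imageI)

theorem proposition3p16:
  fixes V :: "('i::finite \<times> 'i) hop" and e :: "'i hvec" and \<psi> :: "'i hop \<Rightarrow> complex"
  assumes "multiplicative_unitary V"
    and "multiplicity_one V"
    and "fixed_vec V e" and "hnorm e = 1"
    and "is_state \<psi>"
  shows "finite_subgroup_U1 (unimodular_eigenvalues (Lslice V \<psi>))
    \<and> finite_subgroup_U1 (unimodular_eigenvalues (Rslice V \<psi>))
    \<and> (\<forall>z\<in>unimodular_eigenvalues (Lslice V \<psi>) \<union> unimodular_eigenvalues (Rslice V \<psi>).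
          \<exists>n::nat. n > 0 \<and> z ^ n = 1)
    \<and> (\<exists>f g. pre_subgroup V e f \<and> pre_subgroup V e g
          \<and> cspan (unimodular_eigenvectors (Lslice V \<psi>)) = Hsup V f
          \<and> cspan (unimodular_eigenvectors (Rslice V \<psi>)) = Hsub V g)"
proof -
  note mu = assms(1) and st = assms(5)
  have u: "unitary_op V" using mu unfolding multiplicative_unitary_def by blast
  have e1: "vn2 e = 1" by (rule vn2_hnorm1[OF assms(4)])
  have ef: "\<forall>\<eta>. mv V (tens e \<eta>) = tens e \<eta>" using assms(3) unfolding fixed_vec_def by blast
  obtain h where hc: "\<forall>\<xi>. mv V (tens \<xi> h) = tens \<xi> h" and hI: "Im (cinner h e) = 0" and hR: "Re (cinner h e) > 0"
    using cofixed_exists[OF mu ef e1] by blast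
  have he: "cinner h e \<noteq> 0" using hR by auto
  have eh: "cinner e h \<noteq> 0" using he cinner_cnj[of e h] by auto
  interpret L: mu_setting V \<psi> by unfold_locales (rule mu, rule st)
  interpret R: mu_setting "hatV V" \<psi> by unfold_locales (rule hatV_mu[OF mu], rule st)
  have hf: "\<forall>\<eta>. mv (hatV V) (tens h \<eta>) = tens h \<eta>" using hatV_tens_iff[OF u] hc by blast
  have ec: "\<forall>\<xi>. mv (hatV V) (tens \<xi> e) = tens \<xi> e" using hatV_tens_iff[OF u] ef by blast
  note AL = L.main_abstract[OF ef hc eh]
  note AR = R.main_abstract[OF hf ec he]
  have LR: "Lslice (hatV V) \<psi> = adj (Rslice V \<psi>)" by (rule hatV_Lslice[OF st])
  have adjR: "adj (Lslice (hatV V) \<psi>) = Rslice V \<psi>" unfolding LR by simp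
  have corr: "mv (Rslice V \<psi>) w = (\<lambda>i. z * w i) \<longleftrightarrow> mv (Lslice (hatV V) \<psi>) w = (\<lambda>i. cnj z * w i)"
    if z: "cmod z = 1" for w z
  proof
    assume "mv (Rslice V \<psi>) w = (\<lambda>i. z * w i)"
    then have "mv (adj (Lslice (hatV V) \<psi>)) w = (\<lambda>i. z * w i)" unfolding adjR .
    then show "mv (Lslice (hatV V) \<psi>) w = (\<lambda>i. cnj z * w i)" by (rule adj_eig[OF R.contr _ z])
  next
    assume "mv (Lslice (hatV V) \<psi>) w = (\<lambda>i. cnj z * w i)"
    then have "mv (adj (Lslice (hatV V) \<psi>)) w = (\<lambda>i. cnj (cnj z) * w i)"
      by (rule R.eig_adj) (simp add: z)
    then show "mv (Rslice V \<psi>) w = (\<lambda>i. z * w i)" unfolding adjR by simp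
  qed
  have vecs: "unimodular_eigenvectors (Rslice V \<psi>) = unimodular_eigenvectors (Lslice (hatV V) \<psi>)"
  proof
    show "unimodular_eigenvectors (Rslice V \<psi>) \<subseteq> unimodular_eigenvectors (Lslice (hatV V) \<psi>)"
    proof
      fix w assume "w \<in> unimodular_eigenvectors (Rslice V \<psi>)"
      then obtain c where c: "w \<noteq> (\<lambda>_. 0)" "cmod c = 1" "mv (Rslice V \<psi>) w = (\<lambda>i. c * w i)"
        unfolding unimodular_eigenvectors_def by blast
      have "mv (Lslice (hatV V) \<psi>) w = (\<lambda>i. cnj c * w i)" using corr[of c w] c by simp
      moreover have "cmod (cnj c) = 1" using c by simp
      ultimately show "w \<in> unimodular_eigenvectors (Lslice (hatV V) \<psi>)"
        unfolding unimodular_eigenvectors_def using c(1) by blast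
    qed
    show "unimodular_eigenvectors (Lslice (hatV V) \<psi>) \<subseteq> unimodular_eigenvectors (Rslice V \<psi>)"
    proof
      fix w assume "w \<in> unimodular_eigenvectors (Lslice (hatV V) \<psi>)"
      then obtain c where c: "w \<noteq> (\<lambda>_. 0)" "cmod c = 1" "mv (Lslice (hatV V) \<psi>) w = (\<lambda>i. c * w i)"
        unfolding unimodular_eigenvectors_def by blast
      have "mv (Rslice V \<psi>) w = (\<lambda>i. cnj c * w i)" using corr[of "cnj c" w] c by simp
      moreover have "cmod (cnj c) = 1" using c by simp
      ultimately show "w \<in> unimodular_eigenvectors (Rslice V \<psi>)"
        unfolding unimodular_eigenvectors_def using c(1) by blast
    qed
  qed
  have vals: "unimodular_eigenvalues (Rslice V \<psi>) = cnj ` unimodular_eigenvalues (Lslice (hatV V) \<psi>)"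
  proof
    show "unimodular_eigenvalues (Rslice V \<psi>) \<subseteq> cnj ` unimodular_eigenvalues (Lslice (hatV V) \<psi>)"
    proof
      fix z assume "z \<in> unimodular_eigenvalues (Rslice V \<psi>)"
      then obtain w where w: "cmod z = 1" "w \<noteq> (\<lambda>_. 0)" "mv (Rslice V \<psi>) w = (\<lambda>i. z * w i)"
        unfolding unimodular_eigenvalues_def by blast
      have "cnj z \<in> unimodular_eigenvalues (Lslice (hatV V) \<psi>)"
        using corr[OF w(1)] w unfolding unimodular_eigenvalues_def by auto
      then show "z \<in> cnj ` unimodular_eigenvalues (Lslice (hatV V) \<psi>)" by (metis complex_cnj_cnj imageI)
    qed
    show "cnj ` unimodular_eigenvalues (Lslice (hatV V) \<psi>) \<subseteq> unimodular_eigenvalues (Rslice V \<psi>)"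
    proof
      fix z assume "z \<in> cnj ` unimodular_eigenvalues (Lslice (hatV V) \<psi>)"
      then obtain c where zc: "z = cnj c" and "c \<in> unimodular_eigenvalues (Lslice (hatV V) \<psi>)" by blast
      then obtain w where w: "cmod c = 1" "w \<noteq> (\<lambda>_. 0)" "mv (Lslice (hatV V) \<psi>) w = (\<lambda>i. c * w i)"
        unfolding unimodular_eigenvalues_def by blast
      have "mv (Rslice V \<psi>) w = (\<lambda>i. cnj c * w i)" using corr[of "cnj c" w] w by simp
      then show "z \<in> unimodular_eigenvalues (Rslice V \<psi>)" unfolding unimodular_eigenvalues_def zc using w by auto
    qed
  qed
  have a1: "finite_subgroup_U1 (unimodular_eigenvalues (Lslice V \<psi>))" using AL by blast
  have a2: "finite_subgroup_U1 (unimodular_eigenvalues (Rslice V \<psi>))"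
    unfolding vals using AR cnj_group by blast
  have a3: "\<forall>z\<in>unimodular_eigenvalues (Lslice V \<psi>) \<union> unimodular_eigenvalues (Rslice V \<psi>). \<exists>n::nat. n > 0 \<and> z ^ n = 1"
  proof
    fix z assume z: "z \<in> unimodular_eigenvalues (Lslice V \<psi>) \<union> unimodular_eigenvalues (Rslice V \<psi>)"
    show "\<exists>n::nat. n > 0 \<and> z ^ n = 1"
    proof (cases "z \<in> unimodular_eigenvalues (Lslice V \<psi>)")
      case True then show ?thesis using AL by blast
    next
      case False
      then have "z \<in> cnj ` unimodular_eigenvalues (Lslice (hatV V) \<psi>)" using z vals by auto
      then obtain c where "z = cnj c" "c \<in> unimodular_eigenvalues (Lslice (hatV V) \<psi>)" by blast
      moreover obtain n :: nat where "n > 0" "c ^ n = 1" using AR calculation(2) by blast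
      ultimately show ?thesis by (intro exI[of _ n]) (simp flip: complex_cnj_power)
    qed
  qed
  obtain f0 where f0: "f0 \<noteq> (\<lambda>_. 0)" "mv V (tens f0 f0) = tens f0 f0"
      "cspan (unimodular_eigenvectors (Lslice V \<psi>)) = Hsup V f0" "cinner f0 e = of_real (vn2 f0)"
    using AL by blast
  define kf where "kf = sqrt (vn2 f0)"
  define f where "f = (\<lambda>i. complex_of_real (1 / kf) * f0 i)"
  have kf: "kf > 0" "hnorm f = 1" using normalize[OF f0(1)] unfolding kf_def f_def by auto
  have cf: "complex_of_real (1 / kf) \<noteq> 0" using kf by simp
  have pf: "pre_subgroup V e f"
  proof -
    have "cinner f e = of_real (1 / kf) * of_real (vn2 f0)" unfolding f_def cinner_scale_left f0(4) ..
    also have "\<dots> = of_real kf"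
    proof -
      have r: "(1 / kf) * vn2 f0 = kf" unfolding kf_def using vn2_nonneg[of f0] by (simp add: real_div_sqrt)
      show ?thesis by (simp only: of_real_mult[symmetric] r)
    qed
    finally have "cinner f e = of_real kf" .
    then show ?thesis unfolding pre_subgroup_def
      using kf self_fixed_scale[OF cf f0(2)] unfolding f_def by simp
  qed
  have Hf: "cspan (unimodular_eigenvectors (Lslice V \<psi>)) = Hsup V f"
    unfolding f_def Hsup_scale[OF cf] f0(3) ..
  obtain g0 where g0: "g0 \<noteq> (\<lambda>_. 0)" "mv (hatV V) (tens g0 g0) = tens g0 g0"
      "cspan (unimodular_eigenvectors (Lslice (hatV V) \<psi>)) = Hsup (hatV V) g0" "cinner g0 e = cinner h e"
    using AR by blast
  define kg where "kg = sqrt (vn2 g0)"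
  define g where "g = (\<lambda>i. complex_of_real (1 / kg) * g0 i)"
  have kg: "kg > 0" "hnorm g = 1" using normalize[OF g0(1)] unfolding kg_def g_def by auto
  have cg: "complex_of_real (1 / kg) \<noteq> 0" using kg by simp
  have gg: "mv V (tens g g) = tens g g"
    using self_fixed_scale[OF cg g0(2)] hatV_tens_iff[OF u] unfolding g_def by blast
  have pg: "pre_subgroup V e g"
  proof -
    have "cinner g e = of_real (1 / kg) * cinner h e" unfolding g_def cinner_scale_left g0(4) ..
    then have "Im (cinner g e) = 0" "Re (cinner g e) > 0" using hI hR kg(1) by simp_all
    then show ?thesis unfolding pre_subgroup_def using kg gg by simp
  qed
  have Hg: "cspan (unimodular_eigenvectors (Rslice V \<psi>)) = Hsub V g"
    unfolding vecs g0(3) g_def Hsub_scale[OF cg] Hsup_hatV[OF u] ..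
  show ?thesis using a1 a2 a3 pf pg Hf Hg by blast
qed


end
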